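(* Consider the discrete-time LPV system $x_{k+1}=A(p_k)x_k+B(p_k)u_k$ with affine $A(p)=A_0+\sum_{i=1}^{n_p}p_iA_i$, $B(p)=B_0+\sum_{i=1}^{n_p}p_iB_i$, and a data set $\mathcal{D}$ from it such that $\mathcal{D}_p$ has full row rank $(1+n_p)(n_x+n_u)$. Suppose there exist $P\in\mathbb{S}^{n_x}$ with $P\succ0$, matrices $\mathcal{F}\in\mathbb{R}^{(N_d-1)\times n_x(1+n_p+n_p^2)}$ and $F_Q\in\mathbb{R}^{(N_d-1)(1+n_p)\times n_x(1+n_p)}$ related by $$\mathcal{F}\begin{bmatrix}I_{n_x}\\ p\otimes I_{n_x}\\ p\otimes p\otimes I_{n_x}\end{bmatrix}=\begin{bmatrix}I_{N_d-1}\\ p\otimes I_{N_d-1}\end{bmatrix}^\top F_Q\begin{bmatrix}I_{n_x}\\ p\otimes I_{n_x}\end{bmatrix}\quad\forall p\in\mathbb{P},$$ $Y_0\in\mathbb{R}^{n_u\times n_x}$, $\bar Y\in\mathbb{R}^{n_u\times n_xn_p}$ and $\Xi\in\mathbb{S}^{4n_pn_x}$ such that $$\begin{bmatrix}P&0&0\\0&I_{n_p}\otimes P&0\\ Y_0&\bar Y&0\\ 0& I_{n_p}\otimes Y_0& I_{n_p}\otimes\bar Y\end{bmatrix}=\mathcal{D}_p\mathcal{F},$$ and the full-block LMI conditions (defined in the context) hold with $\Delta(p)=\mathrm{diag}(p)\otimes I_{2n_x}$, $W=\begin{bmatrix}P_0&\mathcal{X}_+F_Q\\ (\mathcal{X}_+F_Q)^\top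 & P_0\end{bmatrix}$, $P_0=\mathrm{blkdiag}(P,0_{n_xn_p})$, $\mathcal{X}_+=\mathrm{blkdiag}(X_+,I_{n_p}\otimes X_+)$, $L_{11}=0_{2n_xn_p}$, $L_{12}=1_{n_p}\otimes I_{2n_x}$, $L_{21}=\begin{bmatrix}0_{n_x\times 2n_xn_p}\\ I_{n_p}\otimes[I_{n_x}\ 0]\\ 0_{n_x\times 2n_xn_p}\\ I_{n_p}\otimes[0\ I_{n_x}]\end{bmatrix}$, $L_{22}=\begin{bmatrix}[I_{n_x}\ 0]\\ 1_{n_p}\otimes 0_{n_x\times 2n_x}\\ [0\ I_{n_x}]\\ 1_{n_p}\otimes 0_{n_x\times 2n_x}\end{bmatrix}$. Then $K_0=Y_0P^{-1}$, $\bar K=\bar Y(I_{n_p}\otimes P)^{-1}$, with $\bar K=[K_1\ \cdots\ K_{n_p}]$, give an LPV state-feedback controller $K(p)=K_0+\sum_{i=1}^{n_p}p_iK_i$ that guarantees stability of the closed-loop interconnection $x_{k+1}=(A(p_k)+B(p_k)K(p_k))x_k$.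
   Context: Notation: $\otimes$ Kronecker product; $I_n$ identity; $0_{n\times m}$, $0_n$ zero matrices; $1_n\in\mathbb{R}^n$ the all-ones vector; $\mathbb{S}^n$ real symmetric $n\times n$ matrices; $\mathrm{blkdiag}$ block-diagonal concatenation; $\mathrm{diag}(p)$ diagonal matrix with the entries of $p$. The system has fully measured state $x_k\in\mathbb{R}^{n_x}$, input $u_k\in\mathbb{R}^{n_u}$, scheduling $p_k\in\mathbb{P}\subset\mathbb{R}^{n_p}$ with $\mathbb{P}$ compact and convex; $A_i,B_i$ unknown real matrices. $\mathcal{D}=\{u^d_k,p^d_k,x^d_k\}_{k=1}^{N_d}$ is a trajectory of the system; $U=[u^d_1\cdots u^d_{N_d-1}]$, $U^p=[p^d_1\otimes u^d_1\cdots p^d_{N_d-1}\otimes u^d_{N_d-1}]$, $X=[x^d_1\cdots x^d_{N_d-1}]$, $X^p=[p^d_1\otimes x^d_1\cdots p^d_{N_d-1}\otimes x^d_{N_d-1}]$, $X_+=[x^d_2\cdots x^d_{N_d}]$, $\mathcal{D}_p=[X^\top\ (X^p)^\top\ U^\top\ (U^p)^\top]^\top$. Stability of the closed loop means asymptotic stability for all scheduling trajectories with values in $\mathbb{P}$. Full-block LMI conditions for given $(\Delta(p),W,L_{11},L_{12},L_{21},L_{22})$ and symmetric multiplier $\Xi$: $\begin{bmatrix}L_{11}&L_{12}\\ I&0\end{bmatrix}^\top\Xi\begin{bmatrix}L_{11}&L_{12}\\ I&0\end{bmatrix}-\begin{bmatrix}L_{21}&L_{22}\end{bmatrix}^\top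 W\begin{bmatrix}L_{21}&L_{22}\end{bmatrix}\prec0$ and $\begin{bmatrix}I\\ \Delta(p)\end{bmatrix}^\top\Xi\begin{bmatrix}I\\ \Delta(p)\end{bmatrix}\succeq0$ for all $p\in\mathbb{P}$. *)

theory Defs
  imports "HOL-Analysis.Analysis" "Jordan_Normal_Form.DL_Rank"
begin

definition hcat :: "real mat \<Rightarrow> real mat \<Rightarrow> real mat" (infixr \<open>@\<^sub>h\<close> 66) where
  "A @\<^sub>h B = four_block_mat A B (0\<^sub>m 0 (dim_col A)) (0\<^sub>m 0 (dim_col B))"

definition blkdiag :: "real mat \<Rightarrow> real mat \<Rightarrow> real mat" where
  "blkdiag A B = four_block_mat A (0\<^sub>m (dim_row A) (dim_col B)) (0\<^sub>m (dim_row B) (dim_col A)) B"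

definition kron :: "real mat \<Rightarrow> real mat \<Rightarrow> real mat" where
  "kron A B = mat (dim_row A * dim_row B) (dim_col A * dim_col B)
     (\<lambda>(i,j). A $$ (i div dim_row B, j div dim_col B) * B $$ (i mod dim_row B, j mod dim_col B))"

definition kron_vec :: "real vec \<Rightarrow> real vec \<Rightarrow> real vec" where
  "kron_vec p x = vec (dim_vec p * dim_vec x) (\<lambda>i. p $ (i div dim_vec x) * x $ (i mod dim_vec x))"

definition colmat :: "real vec \<Rightarrow> real mat" where
  "colmat v = mat (dim_vec v) 1 (\<lambda>(i,_). v $ i)"

definition ones :: "nat \<Rightarrow> real mat" where
  "ones n = mat n 1 (\<lambda>_. 1)"

definition diagm :: "real vec \<Rightarrow> real mat" where
  "diagm p = mat (dim_vec p) (dim_vec p) (\<lambda>(i,j). if i = j then p $ i else 0)"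

definition minv :: "real mat \<Rightarrow> real mat" where
  "minv M = (THE B. B \<in> carrier_mat (dim_row M) (dim_row M) \<and> M * B = 1\<^sub>m (dim_row M) \<and> B * M = 1\<^sub>m (dim_row M))"

definition sym_mat :: "nat \<Rightarrow> real mat \<Rightarrow> bool" where
  "sym_mat n M \<longleftrightarrow> M \<in> carrier_mat n n \<and> transpose_mat M = M"

definition pos_def :: "nat \<Rightarrow> real mat \<Rightarrow> bool" where
  "pos_def n M \<longleftrightarrow> sym_mat n M \<and> (\<forall>x \<in> carrier_vec n. x \<noteq> 0\<^sub>v n \<longrightarrow> x \<bullet> (M *\<^sub>v x) > 0)"

definition neg_def :: "nat \<Rightarrow> real mat \<Rightarrow> bool" where
  "neg_def n M \<longleftrightarrow> pos_def n (- M)"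

definition psd :: "nat \<Rightarrow> real mat \<Rightarrow> bool" where
  "psd n M \<longleftrightarrow> sym_mat n M \<and> (\<forall>x \<in> carrier_vec n. x \<bullet> (M *\<^sub>v x) \<ge> 0)"

text \<open>Affine parameter dependence: aff M p n = M 0 + sum_{i=1}^n p_i M i
  (p is 0-indexed, so p_i = p $ (i-1)).\<close>
fun aff :: "(nat \<Rightarrow> real mat) \<Rightarrow> real vec \<Rightarrow> nat \<Rightarrow> real mat" where
  "aff M p 0 = M 0"
| "aff M p (Suc i) = aff M p i + (p $ i) \<cdot>\<^sub>m M (Suc i)"

definition dmat :: "nat \<Rightarrow> nat \<Rightarrow> (nat \<Rightarrow> real vec) \<Rightarrow> real mat" where
  "dmat n N f = mat n N (\<lambda>(i,k). f (k+1) $ i)"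

text \<open>Scheduling set: subset of R^np, compact and convex. Compactness is taken in the
  product topology of nat => real via vec_index (coordinates beyond np are fixed).\<close>
definition convex_vecset :: "real vec set \<Rightarrow> bool" where
  "convex_vecset S \<longleftrightarrow> (\<forall>p\<in>S. \<forall>q\<in>S. \<forall>t::real. 0 \<le> t \<and> t \<le> 1 \<longrightarrow> t \<cdot>\<^sub>v p + (1 - t) \<cdot>\<^sub>v q \<in> S)"

definition sched_set :: "nat \<Rightarrow> real vec set \<Rightarrow> bool" where
  "sched_set np S \<longleftrightarrow> S \<subseteq> carrier_vec np \<and> compact (vec_index ` S) \<and> convex_vecset S"

definition vnorm :: "real vec \<Rightarrow> real" where
  "vnorm x = sqrt (x \<bullet> x)"

fun cl_traj :: "(real vec \<Rightarrow> real mat) \<Rightarrow> (nat \<Rightarrow> real vec) \<Rightarrow> real vec \<Rightarrow> nat \<Rightarrow> real vec" where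
  "cl_traj Acl ps x0 0 = x0"
| "cl_traj Acl ps x0 (Suc k) = Acl (ps k) *\<^sub>v cl_traj Acl ps x0 k"

definition asymp_stable_LPV :: "nat \<Rightarrow> real vec set \<Rightarrow> (real vec \<Rightarrow> real mat) \<Rightarrow> bool" where
  "asymp_stable_LPV nx S Acl \<longleftrightarrow>
     (\<forall>ps. (\<forall>k. ps k \<in> S) \<longrightarrow>
        (\<forall>\<epsilon>>0. \<exists>\<delta>>0. \<forall>x0\<in>carrier_vec nx. vnorm x0 < \<delta> \<longrightarrow> (\<forall>k. vnorm (cl_traj Acl ps x0 k) < \<epsilon>))
      \<and> (\<exists>\<eta>>0. \<forall>x0\<in>carrier_vec nx. vnorm x0 < \<eta> \<longrightarrow> (\<lambda>k. vnorm (cl_traj Acl ps x0 k)) \<longlonglongrightarrow> 0))"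

end

theory Submission
  imports Defs
begin
unbundle no vec_syntax
unbundle no inner_syntax

lemma sum_split_mult:
  fixes g :: "nat \<Rightarrow> 'a::comm_monoid_add"
  shows "(\<Sum>j<m*n. g j) = (\<Sum>a<m. \<Sum>b<n. g (a*n+b))"
  by (simp only: sum_mult_product add.commute)

lemma kron_carrier[simp]: "kron A B \<in> carrier_mat (dim_row A * dim_row B) (dim_col A * dim_col B)"
  unfolding kron_def by simp

lemma kron_dims[simp]: "dim_row (kron A B) = dim_row A * dim_row B" "dim_col (kron A B) = dim_col A * dim_col B"
  unfolding kron_def by simp_all

lemma kron_index[simp]: "i < dim_row A * dim_row B \<Longrightarrow> j < dim_col A * dim_col B \<Longrightarrow>
  kron A B $$ (i,j) = A$$(i div dim_row B, j div dim_col B) * B$$(i mod dim_row B, j mod dim_col B)"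
  unfolding kron_def by simp

lemma kron_vec_dim[simp]: "dim_vec (kron_vec p x) = dim_vec p * dim_vec x"
  unfolding kron_vec_def by simp

lemma kron_vec_carrier: "p \<in> carrier_vec m \<Longrightarrow> x \<in> carrier_vec n \<Longrightarrow> kron_vec p x \<in> carrier_vec (m*n)"
  unfolding kron_vec_def carrier_vec_def by simp

lemma kron_vec_index[simp]: "j < dim_vec p * dim_vec x \<Longrightarrow> kron_vec p x $ j = p $ (j div dim_vec x) * x $ (j mod dim_vec x)"
  unfolding kron_vec_def by simp

definition blk :: "nat \<Rightarrow> real vec \<Rightarrow> nat \<Rightarrow> real vec" where
  "blk n y i = vec n (\<lambda>c. y $ (i*n + c))"

lemma blk_carrier[simp]: "blk n y i \<in> carrier_vec n" unfolding blk_def by simp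
lemma blk_dim[simp]: "dim_vec (blk n y i) = n" unfolding blk_def by simp
lemma blk_index[simp]: "c < n \<Longrightarrow> blk n y i $ c = y $ (i*n+c)" unfolding blk_def by simp

lemma divmod_aux[simp]: "c < (n::nat) \<Longrightarrow> (i*n+c) div n = i" "c < (n::nat) \<Longrightarrow> (i*n+c) mod n = c"
  by auto

lemma idx_bound: assumes "i < m" "c < n" shows "i*n + c < m*(n::nat)"
proof -
  have "i*n+c < (i+1)*n" using assms by simp
  also have "(i+1)*n \<le> m*n" using assms by (intro mult_le_mono1) simp
  finally show ?thesis .
qed

lemma blk_kron_vec: assumes "i < dim_vec p" "z \<in> carrier_vec n"
  shows "blk n (kron_vec p z) i = p $ i \<cdot>\<^sub>v z"
proof (rule eq_vecI)
  fix c assume "c < dim_vec (p $ i \<cdot>\<^sub>v z)"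
  then have c: "c < n" using assms by simp
  have "i*n+c < dim_vec p * n" using assms(1) c by (rule idx_bound)
  then show "blk n (kron_vec p z) i $ c = (p $ i \<cdot>\<^sub>v z) $ c" using assms c by simp
qed (use assms in simp)

lemma colmat_carrier[simp]: "colmat v \<in> carrier_mat (dim_vec v) 1" unfolding colmat_def by simp
lemma colmat_dims[simp]: "dim_row (colmat v) = dim_vec v" "dim_col (colmat v) = 1" unfolding colmat_def by simp_all
lemma colmat_index[simp]: "i < dim_vec v \<Longrightarrow> j < 1 \<Longrightarrow> colmat v $$ (i,j) = v $ i" unfolding colmat_def by simp

lemma kron_col_vec: assumes x: "x \<in> carrier_vec n"
  shows "kron (colmat p) (1\<^sub>m n) *\<^sub>v x = kron_vec p x"
proof (rule eq_vecI)
  show dd: "dim_vec (kron (colmat p) (1\<^sub>m n) *\<^sub>v x) = dim_vec (kron_vec p x)" using x by simp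
  fix j assume "j < dim_vec (kron_vec p x)"
  then have j: "j < dim_vec p * n" using x by simp
  then have jn: "j mod n < n" by (metis mod_less_divisor mult_0_right neq0_conv not_less_zero)
  have "(kron (colmat p) (1\<^sub>m n) *\<^sub>v x) $ j = (\<Sum>c<n. kron (colmat p) (1\<^sub>m n) $$ (j,c) * x $ c)"
    using j x by (simp add: scalar_prod_def lessThan_atLeast0)
  also have "\<dots> = (\<Sum>c<n. (if c = j mod n then p $ (j div n) * x $ c else 0))"
    using j by (intro sum.cong) (auto simp: less_mult_imp_div_less)
  also have "\<dots> = p $ (j div n) * x $ (j mod n)" using jn by simp
  finally show "(kron (colmat p) (1\<^sub>m n) *\<^sub>v x) $ j = kron_vec p x $ j" using j x by simp
qed

lemma mult_vec_sum: "j < dim_row A \<Longrightarrow> dim_vec v = dim_col A \<Longrightarrow>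
  (A *\<^sub>v v) $ j = (\<Sum>c<dim_col A. A $$ (j,c) * v $ c)"
  by (simp add: scalar_prod_def lessThan_atLeast0)

lemma append_zero_dim: "(y::real vec) \<in> carrier_vec 0 \<Longrightarrow> x @\<^sub>v y = x"
  by (intro eq_vecI) auto

lemma hcat_carrier[simp]: "A \<in> carrier_mat r c1 \<Longrightarrow> B \<in> carrier_mat r c2 \<Longrightarrow> A @\<^sub>h B \<in> carrier_mat r (c1+c2)"
  unfolding hcat_def by auto

lemma hcat_mult_vec: assumes A: "A \<in> carrier_mat r c1" and B: "B \<in> carrier_mat r c2"
  and a: "a \<in> carrier_vec c1" and b: "b \<in> carrier_vec c2"
  shows "(A @\<^sub>h B) *\<^sub>v (a @\<^sub>v b) = A *\<^sub>v a + B *\<^sub>v b"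
proof -
  have "(A @\<^sub>h B) *\<^sub>v (a @\<^sub>v b) = (A *\<^sub>v a + B *\<^sub>v b) @\<^sub>v (0\<^sub>m 0 c1 *\<^sub>v a + 0\<^sub>m 0 c2 *\<^sub>v b)"
    unfolding hcat_def using A B a b
    by (subst four_block_mat_mult_vec[OF A B _ _ a b]) auto
  also have "\<dots> = A *\<^sub>v a + B *\<^sub>v b"
    by (rule append_zero_dim, rule add_carrier_vec, rule mult_mat_vec_carrier[OF zero_carrier_mat a], rule mult_mat_vec_carrier[OF zero_carrier_mat b])
  finally show ?thesis .
qed

lemma blkdiag_carrier[simp]: "A \<in> carrier_mat r1 c1 \<Longrightarrow> B \<in> carrier_mat r2 c2 \<Longrightarrow> blkdiag A B \<in> carrier_mat (r1+r2) (c1+c2)"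
  unfolding blkdiag_def by auto

lemma blkdiag_mult_vec: assumes A: "A \<in> carrier_mat r1 c1" and B: "B \<in> carrier_mat r2 c2"
  and a: "a \<in> carrier_vec c1" and b: "b \<in> carrier_vec c2"
  shows "blkdiag A B *\<^sub>v (a @\<^sub>v b) = (A *\<^sub>v a) @\<^sub>v (B *\<^sub>v b)"
  unfolding blkdiag_def using A B a b
  by (subst four_block_mat_mult_vec[OF A _ _ B a b]) auto

lemma transpose_append_rows: assumes A: "(A::real mat) \<in> carrier_mat r1 c" and B: "B \<in> carrier_mat r2 c"
  shows "transpose_mat (A @\<^sub>r B) = transpose_mat A @\<^sub>h transpose_mat B"
  by (rule eq_matI) (use A B in \<open>auto simp: append_rows_def hcat_def\<close>)

lemma transpose_append_rows_vec: assumes A: "(A::real mat) \<in> carrier_mat r1 c" and B: "B \<in> carrier_mat r2 c"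
  and a: "a \<in> carrier_vec r1" and b: "b \<in> carrier_vec r2"
  shows "transpose_mat (A @\<^sub>r B) *\<^sub>v (a @\<^sub>v b) = transpose_mat A *\<^sub>v a + transpose_mat B *\<^sub>v b"
  unfolding transpose_append_rows[OF A B] using A B a b
  by (intro hcat_mult_vec) auto

lemma kron_colT_vec: assumes w: "w \<in> carrier_vec (dim_vec p * n)"
  shows "transpose_mat (kron (colmat p) (1\<^sub>m n)) *\<^sub>v w = vec n (\<lambda>r. \<Sum>i<dim_vec p. p $ i * w $ (i*n+r))"
proof (rule eq_vecI)
  fix r assume "r < dim_vec (vec n (\<lambda>r. \<Sum>i<dim_vec p. p $ i * w $ (i*n+r)))"
  then have r: "r < n" by simp
  have "(transpose_mat (kron (colmat p) (1\<^sub>m n)) *\<^sub>v w) $ r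
     = (\<Sum>c<dim_vec p * n. transpose_mat (kron (colmat p) (1\<^sub>m n)) $$ (r,c) * w $ c)"
    using r w by (subst mult_vec_sum) auto
  also have "\<dots> = (\<Sum>a<dim_vec p. \<Sum>b<n. transpose_mat (kron (colmat p) (1\<^sub>m n)) $$ (r,a*n+b) * w $ (a*n+b))"
    by (rule sum_split_mult)
  also have "\<dots> = (\<Sum>a<dim_vec p. \<Sum>b<n. (if b = r then p $ a * w $ (a*n+r) else 0))"
  proof (intro sum.cong refl)
    fix a b assume a: "a \<in> {..<dim_vec p}" and b: "b \<in> {..<n}"
    have ab: "a*n+b < dim_vec p * n" using a b idx_bound by auto
    show "transpose_mat (kron (colmat p) (1\<^sub>m n)) $$ (r,a*n+b) * w $ (a*n+b) = (if b = r then p $ a * w $ (a*n+r) else 0)"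
      using r ab a b by simp
  qed
  also have "\<dots> = (\<Sum>a<dim_vec p. p $ a * w $ (a*n+r))"
    using r by simp
  finally show "(transpose_mat (kron (colmat p) (1\<^sub>m n)) *\<^sub>v w) $ r = vec n (\<lambda>r. \<Sum>i<dim_vec p. p $ i * w $ (i*n+r)) $ r"
    using r by simp
qed (simp)

lemma kron_I_vec_index: assumes M: "M \<in> carrier_mat nr nc" and w: "w \<in> carrier_vec (m*nc)"
  and i: "i < m" and r: "r < nr"
  shows "(kron (1\<^sub>m m) M *\<^sub>v w) $ (i*nr+r) = (M *\<^sub>v blk nc w i) $ r"
proof -
  have ir: "i*nr + r < m * nr" using i r by (rule idx_bound)
  have "(kron (1\<^sub>m m) M *\<^sub>v w) $ (i*nr+r) = (\<Sum>c<m * nc. kron (1\<^sub>m m) M $$ (i*nr+r,c) * w $ c)"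
    using ir M w by (subst mult_vec_sum) auto
  also have "\<dots> = (\<Sum>a<m. \<Sum>b<nc. kron (1\<^sub>m m) M $$ (i*nr+r,a*nc+b) * w $ (a*nc+b))"
    by (rule sum_split_mult)
  also have "\<dots> = (\<Sum>a<m. \<Sum>b<nc. (if a = i then M $$ (r,b) * w $ (i*nc+b) else 0))"
  proof (intro sum.cong refl)
    fix a b assume a: "a \<in> {..<m}" and b: "b \<in> {..<nc}"
    have ab: "a*nc+b < m * nc" using a b idx_bound by auto
    show "kron (1\<^sub>m m) M $$ (i*nr+r,a*nc+b) * w $ (a*nc+b) = (if a = i then M $$ (r,b) * w $ (i*nc+b) else 0)"
      using ir ab a b r i M by auto
  qed
  also have "\<dots> = (\<Sum>a<m. if a = i then (\<Sum>b<nc. M $$ (r,b) * w $ (i*nc+b)) else 0)"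
    by (intro sum.cong refl) simp
  also have "\<dots> = (\<Sum>b<nc. M $$ (r,b) * w $ (i*nc+b))"
    using i by simp
  also have "\<dots> = (M *\<^sub>v blk nc w i) $ r"
    using M r by (subst mult_vec_sum) auto
  finally show ?thesis .
qed

lemma kron_I_carrier: "M \<in> carrier_mat nr nc \<Longrightarrow> kron (1\<^sub>m m) M \<in> carrier_mat (m*nr) (m*nc)"
  using kron_carrier[of "1\<^sub>m m" M] by simp

lemma vec_eq_blocks: assumes "v \<in> carrier_vec (m*n)" "w \<in> carrier_vec (m*n)"
  and "\<And>i r. i < m \<Longrightarrow> r < n \<Longrightarrow> v $ (i*n+r) = w $ (i*n+r)"
  shows "v = w"
proof (rule eq_vecI)
  fix j assume "j < dim_vec w"
  then have j: "j < m*n" using assms by simp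
  then have n: "n > 0" by (cases n) auto
  have "j div n < m" using j by (simp add: less_mult_imp_div_less)
  moreover have "j mod n < n" using n by simp
  ultimately have "v $ ((j div n)*n + j mod n) = w $ ((j div n)*n + j mod n)" using assms(3) by blast
  then show "v $ j = w $ j" by simp
qed (use assms in simp)

lemma kron_I_kron_vec: assumes M: "M \<in> carrier_mat nr nc" and p: "p \<in> carrier_vec m" and x: "x \<in> carrier_vec nc"
  shows "kron (1\<^sub>m m) M *\<^sub>v kron_vec p x = kron_vec p (M *\<^sub>v x)"
proof (rule vec_eq_blocks[of _ m nr])
  show "kron (1\<^sub>m m) M *\<^sub>v kron_vec p x \<in> carrier_vec (m * nr)"
    by (rule mult_mat_vec_carrier[OF kron_I_carrier[OF M] kron_vec_carrier[OF p x]])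
  show "kron_vec p (M *\<^sub>v x) \<in> carrier_vec (m * nr)" by (rule kron_vec_carrier[OF p mult_mat_vec_carrier[OF M x]])
  fix i r assume i: "i < m" and r: "r < nr"
  have "blk nc (kron_vec p x) i = p $ i \<cdot>\<^sub>v x" using i p x by (intro blk_kron_vec) auto
  then have "(kron (1\<^sub>m m) M *\<^sub>v kron_vec p x) $ (i*nr+r) = (M *\<^sub>v (p $ i \<cdot>\<^sub>v x)) $ r"
    using kron_I_vec_index[OF M kron_vec_carrier[OF p x] i r] by simp
  also have "\<dots> = p $ i * (M *\<^sub>v x) $ r" using M x r by (simp add: mult_mat_vec)
  also have "\<dots> = kron_vec p (M *\<^sub>v x) $ (i*nr+r)"
    using i r p M idx_bound[OF i r] by simp
  finally show "(kron (1\<^sub>m m) M *\<^sub>v kron_vec p x) $ (i*nr+r) = kron_vec p (M *\<^sub>v x) $ (i*nr+r)" .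
qed

lemma kron_index_blk: assumes A: "A \<in> carrier_mat ra ca" and B: "B \<in> carrier_mat rb cb"
  and i: "i < ra" and r: "r < rb" and j: "j < ca" and s: "s < cb"
  shows "kron A B $$ (i*rb + r, j*cb + s) = A $$ (i,j) * B $$ (r,s)"
proof -
  have "i*rb + r < ra*rb" using i r by (rule idx_bound)
  moreover have "j*cb + s < ca*cb" using j s by (rule idx_bound)
  ultimately show ?thesis using A B r s by (simp add: kron_index)
qed

lemma ones_carrier: "ones m \<in> carrier_mat m 1" unfolding ones_def by simp

lemma ones_dims[simp]: "dim_row (ones m) = m" "dim_col (ones m) = 1"
  unfolding ones_def by simp_all
lemma ones_index[simp]: "i < m \<Longrightarrow> j < 1 \<Longrightarrow> ones m $$ (i,j) = 1"
  unfolding ones_def by simp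

lemma kron_ones_vec: assumes M: "M \<in> carrier_mat nr nc" and x: "x \<in> carrier_vec nc"
  shows "kron (ones m) M *\<^sub>v x = kron_vec (vec m (\<lambda>_. 1)) (M *\<^sub>v x)"
proof (rule vec_eq_blocks[of _ m nr])
  have [simp]: "dim_row M = nr" "dim_col M = nc" "dim_vec x = nc" using M x by auto
  have c: "kron (ones m) M \<in> carrier_mat (m*nr) (1*nc)" using kron_carrier[of "ones m" M] M by simp
  show "kron (ones m) M *\<^sub>v x \<in> carrier_vec (m * nr)"
    using mult_mat_vec_carrier[OF c] x by simp
  show "kron_vec (vec m (\<lambda>_. 1)) (M *\<^sub>v x) \<in> carrier_vec (m * nr)"
    by (rule kron_vec_carrier[OF _ mult_mat_vec_carrier[OF M x]]) simp
  fix i r assume i: "i < m" and r: "r < nr"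
  have ir: "i*nr+r < m*nr" using i r by (rule idx_bound)
  have "(kron (ones m) M *\<^sub>v x) $ (i*nr+r) = (\<Sum>c<1*nc. kron (ones m) M $$ (i*nr+r, c) * x $ c)"
    using c x ir by (subst mult_vec_sum) auto
  also have "\<dots> = (\<Sum>c<nc. M $$ (r,c) * x $ c)"
  proof (intro sum.cong)
    fix c assume "c \<in> {..<nc}"
    then have c: "c < nc" by simp
    have "kron (ones m) M $$ (i*nr+r, 0*nc+c) = ones m $$ (i,0) * M $$ (r,c)"
      by (rule kron_index_blk[OF ones_carrier M i r _ c]) simp
    then show "kron (ones m) M $$ (i*nr+r, c) * x $ c = M $$ (r,c) * x $ c" using i by simp
  qed simp
  also have "\<dots> = (M *\<^sub>v x) $ r" using M x r by (subst mult_vec_sum) auto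
  also have "\<dots> = kron_vec (vec m (\<lambda>_. 1)) (M *\<^sub>v x) $ (i*nr+r)"
    using M r i ir by simp
  finally show "(kron (ones m) M *\<^sub>v x) $ (i*nr+r) = kron_vec (vec m (\<lambda>_. 1)) (M *\<^sub>v x) $ (i*nr+r)" .
qed

lemma diagm_dims[simp]: "dim_row (diagm p) = dim_vec p" "dim_col (diagm p) = dim_vec p"
  unfolding diagm_def by simp_all
lemma diagm_index[simp]: "i < dim_vec p \<Longrightarrow> j < dim_vec p \<Longrightarrow> diagm p $$ (i,j) = (if i = j then p $ i else 0)"
  unfolding diagm_def by simp

lemma kron_diag_vec: assumes p: "p \<in> carrier_vec m" and q: "q \<in> carrier_vec m" and x: "x \<in> carrier_vec n"
  shows "kron (diagm p) (1\<^sub>m n) *\<^sub>v kron_vec q x = kron_vec (vec m (\<lambda>i. p $ i * q $ i)) x"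
proof (rule vec_eq_blocks[of _ m n])
  have [simp]: "dim_vec p = m" "dim_vec q = m" "dim_vec x = n" using p q x by auto
  have c: "kron (diagm p) (1\<^sub>m n) \<in> carrier_mat (m*n) (m*n)" using kron_carrier[of "diagm p" "1\<^sub>m n"] p by simp
  have kq: "kron_vec q x \<in> carrier_vec (m*n)" by (rule kron_vec_carrier[OF q x])
  show "kron (diagm p) (1\<^sub>m n) *\<^sub>v kron_vec q x \<in> carrier_vec (m * n)"
    by (rule mult_mat_vec_carrier[OF c kq])
  show "kron_vec (vec m (\<lambda>i. p $ i * q $ i)) x \<in> carrier_vec (m * n)"
    by (rule kron_vec_carrier[OF _ x]) simp
  fix i r assume i: "i < m" and r: "r < n"
  have ir: "i*n+r < m*n" using i r by (rule idx_bound)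
  have "(kron (diagm p) (1\<^sub>m n) *\<^sub>v kron_vec q x) $ (i*n+r)
      = (\<Sum>c<m*n. kron (diagm p) (1\<^sub>m n) $$ (i*n+r, c) * kron_vec q x $ c)"
    using c kq ir by (subst mult_vec_sum) auto
  also have "\<dots> = (\<Sum>a<m. \<Sum>b<n. kron (diagm p) (1\<^sub>m n) $$ (i*n+r, a*n+b) * kron_vec q x $ (a*n+b))"
    by (rule sum_split_mult)
  also have "\<dots> = (\<Sum>a<m. if a = i then (\<Sum>b<n. if b = r then p $ i * q $ i * x $ r else 0) else 0)"
  proof (intro sum.cong refl)
    fix a assume a: "a \<in> {..<m}"
    show "(\<Sum>b<n. kron (diagm p) (1\<^sub>m n) $$ (i*n+r, a*n+b) * kron_vec q x $ (a*n+b))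
       = (if a = i then (\<Sum>b<n. if b = r then p $ i * q $ i * x $ r else 0) else 0)"
    proof (cases "a = i")
      case True
      have "(\<Sum>b<n. kron (diagm p) (1\<^sub>m n) $$ (i*n+r, i*n+b) * kron_vec q x $ (i*n+b)) = (\<Sum>b<n. if b = r then p $ i * q $ i * x $ r else 0)"
      proof (intro sum.cong refl)
        fix b assume b: "b \<in> {..<n}"
        have ab: "i*n+b < m*n" using i b idx_bound by auto
        have "kron (diagm p) (1\<^sub>m n) $$ (i*n+r, i*n+b) = diagm p $$ (i,i) * 1\<^sub>m n $$ (r,b)"
          by (rule kron_index_blk[of _ m m _ n n]) (use i r b in auto)
        moreover have "kron_vec q x $ (i*n+b) = q $ i * x $ b" using ab b by simp
        ultimately show "kron (diagm p) (1\<^sub>m n) $$ (i*n+r, i*n+b) * kron_vec q x $ (i*n+b) = (if b = r then p $ i * q $ i * x $ r else 0)"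
          using i r b by simp
      qed
      then show ?thesis using True by simp
    next
      case False
      have "kron (diagm p) (1\<^sub>m n) $$ (i*n+r, a*n+b) * kron_vec q x $ (a*n+b) = 0" if b: "b < n" for b
      proof -
        have "kron (diagm p) (1\<^sub>m n) $$ (i*n+r, a*n+b) = diagm p $$ (i,a) * 1\<^sub>m n $$ (r,b)"
          by (rule kron_index_blk[of _ m m _ n n]) (use i r b a in auto)
        then show ?thesis using i a b False by simp
      qed
      then have "(\<Sum>b<n. kron (diagm p) (1\<^sub>m n) $$ (i*n+r, a*n+b) * kron_vec q x $ (a*n+b)) = (\<Sum>b<n. 0)"
        by (intro sum.cong refl) simp
      then show ?thesis using False by simp
    qed
  qed
  also have "\<dots> = p $ i * q $ i * x $ r" using i r by simp
  also have "\<dots> = kron_vec (vec m (\<lambda>i. p $ i * q $ i)) x $ (i*n+r)"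
    using i r ir x by simp
  finally show "(kron (diagm p) (1\<^sub>m n) *\<^sub>v kron_vec q x) $ (i*n+r) = kron_vec (vec m (\<lambda>i. p $ i * q $ i)) x $ (i*n+r)" .
qed

lemma vec_eq_blocks3: assumes v: "v \<in> carrier_vec (m1*m2*m3)" and w: "w \<in> carrier_vec (m1*m2*m3)"
  and e: "\<And>i a r. i < m1 \<Longrightarrow> a < m2 \<Longrightarrow> r < m3 \<Longrightarrow> v $ ((i*m2+a)*m3+r) = w $ ((i*m2+a)*m3+r)"
  shows "v = w"
proof (rule vec_eq_blocks[of _ "m1*m2" m3])
  show "v \<in> carrier_vec (m1 * m2 * m3)" "w \<in> carrier_vec (m1 * m2 * m3)" using v w by auto
  fix k r assume k: "k < m1*m2" and r: "r < m3"
  then have m2: "m2 > 0" by (cases m2) auto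
  have "k div m2 < m1" using k by (simp add: less_mult_imp_div_less)
  moreover have "k mod m2 < m2" using m2 by simp
  ultimately have "v $ (((k div m2)*m2 + k mod m2)*m3+r) = w $ (((k div m2)*m2 + k mod m2)*m3+r)"
    using e r by blast
  then show "v $ (k*m3+r) = w $ (k*m3+r)" by simp
qed

lemma kron_vec_assoc: assumes p: "p \<in> carrier_vec m1" and q: "q \<in> carrier_vec m2" and x: "x \<in> carrier_vec m3"
  shows "kron_vec (kron_vec p q) x = kron_vec p (kron_vec q x)"
proof (rule vec_eq_blocks3[of _ m1 m2 m3])
  show "kron_vec (kron_vec p q) x \<in> carrier_vec (m1 * m2 * m3)"
    by (rule kron_vec_carrier[OF kron_vec_carrier[OF p q] x])
  show "kron_vec p (kron_vec q x) \<in> carrier_vec (m1 * m2 * m3)"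
    using kron_vec_carrier[OF p kron_vec_carrier[OF q x]] by (simp add: mult.assoc)
  fix i a r assume i: "i < m1" and a: "a < m2" and r: "r < m3"
  have b1: "i*m2+a < m1*m2" using i a by (rule idx_bound)
  have b2: "(i*m2+a)*m3+r < m1*m2*m3" using b1 r by (rule idx_bound)
  have b3: "a*m3+r < m2*m3" using a r by (rule idx_bound)
  have eq: "(i*m2+a)*m3+r = i*(m2*m3) + (a*m3+r)" by (simp add: algebra_simps)
  have b4: "i*(m2*m3) + (a*m3+r) < m1*(m2*m3)" using i b3 by (rule idx_bound)
  have "kron_vec (kron_vec p q) x $ ((i*m2+a)*m3+r) = p $ i * q $ a * x $ r"
    using p q x b1 b2 r a by simp
  also have "\<dots> = kron_vec p (kron_vec q x) $ (i*(m2*m3) + (a*m3+r))"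
    using p q x b3 b4 r a by simp
  finally show "kron_vec (kron_vec p q) x $ ((i*m2+a)*m3+r) = kron_vec p (kron_vec q x) $ ((i*m2+a)*m3+r)"
    unfolding eq .
qed

lemma kron_colmat_colmat: "kron (colmat p) (colmat q) = colmat (kron_vec p q)"
proof (rule eq_matI)
  fix i j assume i: "i < dim_row (colmat (kron_vec p q))" and j: "j < dim_col (colmat (kron_vec p q))"
  then have i': "i < dim_vec p * dim_vec q" and j0: "j = 0" by auto
  then have q0: "dim_vec q > 0" by (cases "dim_vec q") auto
  have "i div dim_vec q < dim_vec p" using i' by (simp add: less_mult_imp_div_less)
  moreover have "i mod dim_vec q < dim_vec q" using q0 by simp
  ultimately show "kron (colmat p) (colmat q) $$ (i, j) = colmat (kron_vec p q) $$ (i, j)"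
    using i' j0 by simp
qed auto

lemma kron_col2_vec: assumes p: "p \<in> carrier_vec m1" and q: "q \<in> carrier_vec m2" and x: "x \<in> carrier_vec n"
  shows "kron (kron (colmat p) (colmat q)) (1\<^sub>m n) *\<^sub>v x = kron_vec p (kron_vec q x)"
  unfolding kron_colmat_colmat kron_col_vec[OF x] using kron_vec_assoc[OF p q x] .

lemma colblk_vec: assumes M: "M \<in> carrier_mat r (m*n)" and p: "p \<in> carrier_vec m" and z: "z \<in> carrier_vec n"
  and rho: "\<rho> < r"
  shows "(M *\<^sub>v kron_vec p z) $ \<rho> = (\<Sum>i<m. p $ i * (mat r n (\<lambda>(a,c). M $$ (a, i*n+c)) *\<^sub>v z) $ \<rho>)"
proof -
  have [simp]: "dim_vec p = m" "dim_vec z = n" "dim_row M = r" "dim_col M = m*n" using p z M by auto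
  have kz: "kron_vec p z \<in> carrier_vec (m*n)" by (rule kron_vec_carrier[OF p z])
  have "(M *\<^sub>v kron_vec p z) $ \<rho> = (\<Sum>c<m*n. M $$ (\<rho>,c) * kron_vec p z $ c)"
    using M kz rho by (subst mult_vec_sum) auto
  also have "\<dots> = (\<Sum>i<m. \<Sum>b<n. M $$ (\<rho>,i*n+b) * kron_vec p z $ (i*n+b))"
    by (rule sum_split_mult)
  also have "\<dots> = (\<Sum>i<m. p $ i * (\<Sum>b<n. M $$ (\<rho>,i*n+b) * z $ b))"
    unfolding sum_distrib_left
  proof (intro sum.cong refl)
    fix i b assume i: "i \<in> {..<m}" and b: "b \<in> {..<n}"
    have ib: "i*n+b < m*n" using i b idx_bound by auto
    show "M $$ (\<rho>,i*n+b) * kron_vec p z $ (i*n+b) = p $ i * (M $$ (\<rho>,i*n+b) * z $ b)"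
      using ib b p z by simp
  qed
  also have "\<dots> = (\<Sum>i<m. p $ i * (mat r n (\<lambda>(a,c). M $$ (a, i*n+c)) *\<^sub>v z) $ \<rho>)"
  proof (intro sum.cong refl)
    fix i assume i: "i \<in> {..<m}"
    show "p $ i * (\<Sum>b<n. M $$ (\<rho>,i*n+b) * z $ b) = p $ i * (mat r n (\<lambda>(a,c). M $$ (a, i*n+c)) *\<^sub>v z) $ \<rho>"
      using rho z by (subst mult_vec_sum) auto
  qed
  finally show ?thesis .
qed

lemma aff_carrier: "(\<forall>i\<le>n. M i \<in> carrier_mat r c) \<Longrightarrow> aff M p n \<in> carrier_mat r c"
  by (induction n) auto

lemma smult_mat_vec_index: assumes B: "B \<in> carrier_mat r c" and x: "x \<in> carrier_vec c" and rho: "\<rho> < r"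
  shows "((k::real) \<cdot>\<^sub>m B *\<^sub>v x) $ \<rho> = k * (B *\<^sub>v x) $ \<rho>"
  using B x rho by (simp add: mult_vec_sum sum_distrib_left mult.assoc)

lemma aff_mult_vec_index: assumes M: "\<forall>i\<le>n. M i \<in> carrier_mat r c" and x: "x \<in> carrier_vec c" and rho: "\<rho> < r"
  shows "(aff M p n *\<^sub>v x) $ \<rho> = (M 0 *\<^sub>v x) $ \<rho> + (\<Sum>i<n. p $ i * (M (Suc i) *\<^sub>v x) $ \<rho>)"
  using M
proof (induction n)
  case 0 then show ?case by simp
next
  case (Suc n)
  have A: "aff M p n \<in> carrier_mat r c" using Suc.prems by (intro aff_carrier) auto
  have B: "M (Suc n) \<in> carrier_mat r c" using Suc.prems by auto
  have "(aff M p (Suc n) *\<^sub>v x) $ \<rho> = (aff M p n *\<^sub>v x + (p $ n \<cdot>\<^sub>m M (Suc n)) *\<^sub>v x) $ \<rho>"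
    using A B x by (simp add: add_mult_distrib_mat_vec)
  also have "\<dots> = (aff M p n *\<^sub>v x) $ \<rho> + p $ n * (M (Suc n) *\<^sub>v x) $ \<rho>"
    using A B x rho smult_mat_vec_index[OF B x rho] by simp
  finally show ?case using Suc by simp
qed

lemma minv_unique: assumes M: "M \<in> carrier_mat n n" and B: "B \<in> carrier_mat n n"
  and MB: "M * B = 1\<^sub>m n" and BM: "B * M = 1\<^sub>m n"
  shows "minv M = B"
proof -
  have dr: "dim_row M = n" using M by simp
  show ?thesis unfolding minv_def dr
  proof (rule the_equality)
    show "B \<in> carrier_mat n n \<and> M * B = 1\<^sub>m n \<and> B * M = 1\<^sub>m n" using B MB BM by simp
    fix B' assume h: "B' \<in> carrier_mat n n \<and> M * B' = 1\<^sub>m n \<and> B' * M = 1\<^sub>m n"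
    then have B': "B' \<in> carrier_mat n n" by simp
    have "B' = B' * (M * B)" using MB B' by simp
    also have "\<dots> = (B' * M) * B" using assoc_mult_mat[OF B' M B] by simp
    also have "\<dots> = B" using h B by simp
    finally show "B' = B" .
  qed
qed

lemma inj_imp_inverse: assumes M: "(M::real mat) \<in> carrier_mat n n"
  and inj: "\<And>v. v \<in> carrier_vec n \<Longrightarrow> M *\<^sub>v v = 0\<^sub>v n \<Longrightarrow> v = 0\<^sub>v n"
  shows "\<exists>B\<in>carrier_mat n n. M * B = 1\<^sub>m n \<and> B * M = 1\<^sub>m n"
proof -
  have d: "det M \<noteq> 0" using det_0_iff_vec_prod_zero[OF M] inj by blast
  from det_non_zero_imp_unit[OF M d, of undefined] show ?thesis
    unfolding Units_def ring_mat_def by auto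
qed

lemma minv_props: assumes M: "(M::real mat) \<in> carrier_mat n n"
  and inj: "\<And>v. v \<in> carrier_vec n \<Longrightarrow> M *\<^sub>v v = 0\<^sub>v n \<Longrightarrow> v = 0\<^sub>v n"
  shows "minv M \<in> carrier_mat n n" "M * minv M = 1\<^sub>m n" "minv M * M = 1\<^sub>m n"
proof -
  obtain B where B: "B \<in> carrier_mat n n" "M * B = 1\<^sub>m n" "B * M = 1\<^sub>m n"
    using inj_imp_inverse[OF M inj] by blast
  have "minv M = B" by (rule minv_unique[OF M B])
  then show "minv M \<in> carrier_mat n n" "M * minv M = 1\<^sub>m n" "minv M * M = 1\<^sub>m n" using B by auto
qed

lemma pos_def_inj: assumes P: "pos_def n P" and v: "v \<in> carrier_vec n" and Pv: "P *\<^sub>v v = 0\<^sub>v n"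
  shows "v = 0\<^sub>v n"
proof (rule ccontr)
  assume "v \<noteq> 0\<^sub>v n"
  then have "scalar_prod v (P *\<^sub>v v) > 0" using P v unfolding pos_def_def by blast
  moreover have "scalar_prod v (P *\<^sub>v v) = 0" unfolding Pv using v by simp
  ultimately show False by simp
qed

lemma quad_sum: assumes M: "M \<in> carrier_mat n n" and x: "x \<in> carrier_vec n"
  shows "scalar_prod x (M *\<^sub>v x) = (\<Sum>i<n. \<Sum>j<n. x $ i * M $$ (i,j) * x $ j)"
  using M x by (simp add: scalar_prod_def mult_vec_sum lessThan_atLeast0 sum_distrib_left mult.assoc)

lemma sq_le_sp: assumes x: "(x::real vec) \<in> carrier_vec n" and i: "i < n"
  shows "(x $ i)^2 \<le> scalar_prod x x"
proof -
  have "scalar_prod x x = (\<Sum>k<n. (x $ k)^2)" using x by (simp add: scalar_prod_def lessThan_atLeast0 power2_eq_square)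
  moreover have "(x $ i)^2 \<le> (\<Sum>k<n. (x $ k)^2)" using i by (intro member_le_sum) auto
  ultimately show ?thesis by simp
qed

lemma quad_upper: assumes M: "(M::real mat) \<in> carrier_mat n n"
  shows "\<exists>C>0. \<forall>x\<in>carrier_vec n. scalar_prod x (M *\<^sub>v x) \<le> C * scalar_prod x x"
proof -
  define C where "C = 1 + (\<Sum>i<n. \<Sum>j<n. \<bar>M $$ (i,j)\<bar>)"
  have C0: "C > 0" unfolding C_def by (smt (verit) sum_nonneg abs_ge_zero)
  have "scalar_prod x (M *\<^sub>v x) \<le> C * scalar_prod x x" if x: "x \<in> carrier_vec n" for x
  proof -
    have xx: "scalar_prod x x \<ge> 0" using x by (simp add: scalar_prod_def sum_nonneg)
    have b: "x $ i * M $$ (i,j) * x $ j \<le> \<bar>M $$ (i,j)\<bar> * scalar_prod x x" if "i < n" "j < n" for i j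
    proof -
      have a: "(x$i)^2 \<le> scalar_prod x x" "(x$j)^2 \<le> scalar_prod x x" using sq_le_sp[OF x] that by auto
      have h: "(\<bar>x $ i\<bar> - \<bar>x $ j\<bar>)^2 = (x$i)^2 + (x$j)^2 - 2*(\<bar>x $ i\<bar> * \<bar>x $ j\<bar>)"
        by (simp add: power2_diff power2_abs mult.assoc)
      have "0 \<le> (\<bar>x $ i\<bar> - \<bar>x $ j\<bar>)^2" by (rule zero_le_power2)
      then have c: "\<bar>x $ i\<bar> * \<bar>x $ j\<bar> \<le> scalar_prod x x" unfolding h using a by linarith
      have "x $ i * M $$ (i,j) * x $ j \<le> \<bar>x $ i * M $$ (i,j) * x $ j\<bar>" by (rule abs_ge_self)
      also have "\<dots> = \<bar>M $$ (i,j)\<bar> * (\<bar>x $ i\<bar> * \<bar>x $ j\<bar>)" by (simp add: abs_mult mult_ac)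
      also have "\<dots> \<le> \<bar>M $$ (i,j)\<bar> * scalar_prod x x" using c by (simp add: mult_left_mono)
      finally show ?thesis .
    qed
    have "scalar_prod x (M *\<^sub>v x) = (\<Sum>i<n. \<Sum>j<n. x $ i * M $$ (i,j) * x $ j)" by (rule quad_sum[OF M x])
    also have "\<dots> \<le> (\<Sum>i<n. \<Sum>j<n. \<bar>M $$ (i,j)\<bar> * scalar_prod x x)"
      using b by (intro sum_mono) auto
    also have "\<dots> = (\<Sum>i<n. \<Sum>j<n. \<bar>M $$ (i,j)\<bar>) * scalar_prod x x" by (simp add: sum_distrib_right)
    also have "\<dots> \<le> C * scalar_prod x x" unfolding C_def using xx by (simp add: distrib_right)
    finally show ?thesis .
  qed
  then show ?thesis using C0 by blast
qed

lemma compact_box_fun: assumes "\<And>i. compact (T i :: real set)"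
  shows "compact (PiE UNIV T)"
proof -
  have "compactin (product_topology (\<lambda>i. euclidean) UNIV) (PiE UNIV T)"
    unfolding compactin_PiE using assms by simp
  then show ?thesis unfolding euclidean_product_topology by simp
qed

lemma sp_nonneg: "scalar_prod (x::real vec) x \<ge> 0"
  by (simp add: scalar_prod_def sum_nonneg)

lemma sp_pos: assumes x: "(x::real vec) \<in> carrier_vec n" and nz: "x \<noteq> 0\<^sub>v n"
  shows "scalar_prod x x > 0"
proof -
  obtain i where i: "i < n" "x $ i \<noteq> 0"
    using nz x by (metis carrier_vecD eq_vecI index_zero_vec(1) index_zero_vec(2))
  have "scalar_prod x x = (\<Sum>k<n. (x $ k)^2)" using x by (simp add: scalar_prod_def lessThan_atLeast0 power2_eq_square)
  moreover have "(x $ i)^2 \<le> (\<Sum>k<n. (x $ k)^2)" using i by (intro member_le_sum) auto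
  moreover have "(x $ i)^2 > 0" using i by simp
  ultimately show ?thesis by linarith
qed

lemma pos_def_margin: assumes P: "pos_def n M"
  shows "\<exists>\<epsilon>>0. \<forall>x\<in>carrier_vec n. \<epsilon> * scalar_prod x x \<le> scalar_prod x (M *\<^sub>v x)"
proof (cases "n = 0")
  case True
  have "1 * scalar_prod x x \<le> scalar_prod x (M *\<^sub>v x)" if "x \<in> carrier_vec n" for x
    using that True by (simp add: scalar_prod_def)
  then show ?thesis by (intro exI[of _ 1]) auto
next
  case False
  then have n0: "n > 0" by simp
  have M: "M \<in> carrier_mat n n" using P unfolding pos_def_def sym_mat_def by simp
  define T where "T = (\<lambda>i::nat. if i < n then {-1..1::real} else {0})"
  define S where "S = {f::nat\<Rightarrow>real. (\<Sum>i<n. (f i)^2) = 1}"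
  define K where "K = PiE UNIV T \<inter> S"
  define q where "q = (\<lambda>f::nat\<Rightarrow>real. \<Sum>i<n. \<Sum>j<n. f i * M $$ (i,j) * f j)"
  have ci: "\<And>i. continuous_on UNIV (\<lambda>f::nat\<Rightarrow>real. f i)" by simp
  have cT: "compact (PiE UNIV T)" by (rule compact_box_fun) (simp add: T_def)
  have cS: "closed S" unfolding S_def
    by (rule closed_Collect_eq) (intro continuous_intros ci)+
  have cK: "compact K" unfolding K_def using cT cS by (rule compact_Int_closed)
  define e0 where "e0 = (\<lambda>i::nat. if i = 0 then 1 else (0::real))"
  have "(\<Sum>i<n. (e0 i)^2) = (\<Sum>i<n. if i = 0 then 1 else 0)" by (intro sum.cong) (auto simp: e0_def)
  also have "\<dots> = 1" using n0 by simp
  finally have "e0 \<in> S" unfolding S_def by simp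
  moreover have "e0 \<in> PiE UNIV T" unfolding PiE_UNIV_domain T_def e0_def using n0 by auto
  ultimately have Kne: "K \<noteq> {}" unfolding K_def by blast
  have cq: "continuous_on K q" unfolding q_def
    by (rule continuous_on_subset[of UNIV]) (intro continuous_intros ci, simp)
  obtain f0 where f0: "f0 \<in> K" and fmin: "\<And>f. f \<in> K \<Longrightarrow> q f0 \<le> q f"
    using continuous_attains_inf[OF cK Kne cq] by blast
  define v0 where "v0 = vec n f0"
  have v0c: "v0 \<in> carrier_vec n" unfolding v0_def by simp
  have "v0 \<noteq> 0\<^sub>v n"
  proof
    assume "v0 = 0\<^sub>v n"
    then have "\<And>i. i < n \<Longrightarrow> f0 i = 0" unfolding v0_def by (metis index_vec index_zero_vec(1))
    then have "(\<Sum>i<n. (f0 i)^2) = 0" by simp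
    moreover have "(\<Sum>i<n. (f0 i)^2) = 1" using f0 unfolding K_def S_def by simp
    ultimately show False by simp
  qed
  then have "scalar_prod v0 (M *\<^sub>v v0) > 0" using P v0c unfolding pos_def_def by blast
  moreover have "scalar_prod v0 (M *\<^sub>v v0) = q f0"
  proof -
    have "scalar_prod v0 (M *\<^sub>v v0) = (\<Sum>i<n. \<Sum>j<n. v0 $ i * M $$ (i,j) * v0 $ j)" by (rule quad_sum[OF M v0c])
    also have "\<dots> = q f0" unfolding q_def v0_def by (intro sum.cong refl) simp
    finally show ?thesis .
  qed
  ultimately have m0: "q f0 > 0" by simp
  have "q f0 * scalar_prod x x \<le> scalar_prod x (M *\<^sub>v x)" if x: "x \<in> carrier_vec n" for x
  proof (cases "x = 0\<^sub>v n")
    case True then show ?thesis using M by simp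
  next
    case False
    have xx: "scalar_prod x x > 0" by (rule sp_pos[OF x False])
    define s where "s = sqrt (scalar_prod x x)"
    have s0: "s > 0" unfolding s_def using xx by simp
    have s2: "s^2 = scalar_prod x x" unfolding s_def using xx by simp
    define f where "f = (\<lambda>i. if i < n then x $ i / s else 0)"
    have "f \<in> PiE UNIV T" unfolding PiE_UNIV_domain
    proof (intro Pi_I)
      fix i show "f i \<in> T i"
      proof (cases "i < n")
        case True
        have "(x $ i)^2 \<le> scalar_prod x x" by (rule sq_le_sp[OF x True])
        then have "\<bar>x $ i\<bar> \<le> s" unfolding s_def by (simp add: real_le_rsqrt)
        then show ?thesis using True s0 unfolding f_def T_def
          by (simp add: abs_le_iff pos_divide_le_eq pos_le_divide_eq)
      next
        case False then show ?thesis unfolding f_def T_def by simp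
      qed
    qed
    moreover have "f \<in> S"
    proof -
      have "(\<Sum>i<n. (f i)^2) = (\<Sum>i<n. (x $ i)^2 / s^2)"
        unfolding f_def by (intro sum.cong refl) (simp add: power_divide)
      also have "\<dots> = (\<Sum>i<n. (x $ i)^2) / s^2" by (simp add: sum_divide_distrib)
      also have "(\<Sum>i<n. (x $ i)^2) = scalar_prod x x"
        using x by (simp add: scalar_prod_def lessThan_atLeast0 power2_eq_square)
      finally show ?thesis unfolding S_def using s2 xx by simp
    qed
    ultimately have fK: "f \<in> K" unfolding K_def by blast
    have "q f = (\<Sum>i<n. \<Sum>j<n. x $ i * M $$ (i,j) * x $ j / s^2)"
      unfolding q_def f_def by (intro sum.cong refl) (simp add: power2_eq_square)
    also have "\<dots> = scalar_prod x (M *\<^sub>v x) / s^2"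
      unfolding quad_sum[OF M x] by (simp add: sum_divide_distrib)
    finally have qf: "q f = scalar_prod x (M *\<^sub>v x) / scalar_prod x x" using s2 by simp
    have "q f0 \<le> scalar_prod x (M *\<^sub>v x) / scalar_prod x x" using fmin[OF fK] qf by simp
    then show ?thesis using xx by (simp add: pos_le_divide_eq)
  qed
  then show ?thesis using m0 by blast
qed

lemma dmat_carrier: "dmat n N f \<in> carrier_mat n N" unfolding dmat_def by simp
lemma dmat_dims[simp]: "dim_row (dmat n N f) = n" "dim_col (dmat n N f) = N" unfolding dmat_def by simp_all
lemma dmat_index[simp]: "i < n \<Longrightarrow> k < N \<Longrightarrow> dmat n N f $$ (i,k) = f (Suc k) $ i" unfolding dmat_def by simp

lemma dmat_vec_index: assumes w: "w \<in> carrier_vec N" and c: "c < n"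
  shows "(dmat n N f *\<^sub>v w) $ c = (\<Sum>k<N. f (Suc k) $ c * w $ k)"
  using w c by (subst mult_vec_sum) auto

lemma data_generic:
  fixes M :: "nat \<Rightarrow> real mat" and f g :: "nat \<Rightarrow> real vec"
  assumes M: "\<forall>i\<le>np. M i \<in> carrier_mat nx n"
    and f: "\<And>k. k < N \<Longrightarrow> f (Suc k) \<in> carrier_vec n"
    and g: "\<And>k. k < N \<Longrightarrow> g (Suc k) \<in> carrier_vec np"
    and w: "w \<in> carrier_vec N" and r: "r < nx"
  shows "(\<Sum>k<N. w $ k * (aff M (g (Suc k)) np *\<^sub>v f (Suc k)) $ r)
       = (M 0 *\<^sub>v (dmat n N f *\<^sub>v w)) $ r
         + (\<Sum>i<np. (M (Suc i) *\<^sub>v blk n (dmat (np*n) N (\<lambda>k. kron_vec (g k) (f k)) *\<^sub>v w) i) $ r)"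
proof -
  have M0: "M 0 \<in> carrier_mat nx n" using M by simp
  have M0d[simp]: "dim_row (M 0) = nx" "dim_col (M 0) = n" using M0 by auto
  have fd[simp]: "\<And>k. k < N \<Longrightarrow> dim_vec (f (Suc k)) = n" using f by auto
  have MS: "\<And>i. i < np \<Longrightarrow> M (Suc i) \<in> carrier_mat nx n" using M by simp
  have "(\<Sum>k<N. w $ k * (aff M (g (Suc k)) np *\<^sub>v f (Suc k)) $ r)
      = (\<Sum>k<N. w $ k * ((M 0 *\<^sub>v f (Suc k)) $ r + (\<Sum>i<np. g (Suc k) $ i * (M (Suc i) *\<^sub>v f (Suc k)) $ r)))"
    using aff_mult_vec_index[OF M f r] by simp
  also have "\<dots> = (\<Sum>k<N. w $ k * (M 0 *\<^sub>v f (Suc k)) $ r) + (\<Sum>i<np. \<Sum>k<N. w $ k * g (Suc k) $ i * (M (Suc i) *\<^sub>v f (Suc k)) $ r)"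
    by (simp add: distrib_left sum.distrib sum_distrib_left sum.swap[of _ "{..<N}" "{..<np}"] mult.assoc)
  also have "(\<Sum>k<N. w $ k * (M 0 *\<^sub>v f (Suc k)) $ r) = (M 0 *\<^sub>v (dmat n N f *\<^sub>v w)) $ r"
  proof -
    have "(M 0 *\<^sub>v (dmat n N f *\<^sub>v w)) $ r = (\<Sum>c<n. M 0 $$ (r,c) * (dmat n N f *\<^sub>v w) $ c)"
      using M0 r w by (subst mult_vec_sum) auto
    also have "\<dots> = (\<Sum>c<n. M 0 $$ (r,c) * (\<Sum>k<N. f (Suc k) $ c * w $ k))"
      using w by (intro sum.cong refl) (simp add: dmat_vec_index[OF w] del: index_mult_mat_vec)
    also have "\<dots> = (\<Sum>k<N. w $ k * (\<Sum>c<n. M 0 $$ (r,c) * f (Suc k) $ c))"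
      by (simp add: sum_distrib_left sum.swap[of _ "{..<n}" "{..<N}"] mult_ac)
    also have "\<dots> = (\<Sum>k<N. w $ k * (M 0 *\<^sub>v f (Suc k)) $ r)"
      using M0 r f by (intro sum.cong refl) (simp add: mult_vec_sum del: index_mult_mat_vec)
    finally show ?thesis by simp
  qed
  also have "(\<Sum>i<np. \<Sum>k<N. w $ k * g (Suc k) $ i * (M (Suc i) *\<^sub>v f (Suc k)) $ r)
     = (\<Sum>i<np. (M (Suc i) *\<^sub>v blk n (dmat (np*n) N (\<lambda>k. kron_vec (g k) (f k)) *\<^sub>v w) i) $ r)"
  proof (intro sum.cong refl)
    fix i assume "i \<in> {..<np}"
    then have i: "i < np" by simp
    have Mi: "M (Suc i) \<in> carrier_mat nx n" using MS[OF i] .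
    have Mid[simp]: "dim_row (M (Suc i)) = nx" "dim_col (M (Suc i)) = n" using Mi by auto
    have "(M (Suc i) *\<^sub>v blk n (dmat (np*n) N (\<lambda>k. kron_vec (g k) (f k)) *\<^sub>v w) i) $ r
       = (\<Sum>c<n. M (Suc i) $$ (r,c) * (dmat (np*n) N (\<lambda>k. kron_vec (g k) (f k)) *\<^sub>v w) $ (i*n+c))"
      using Mi r by (subst mult_vec_sum) auto
    also have "\<dots> = (\<Sum>c<n. M (Suc i) $$ (r,c) * (\<Sum>k<N. g (Suc k) $ i * f (Suc k) $ c * w $ k))"
    proof (intro sum.cong refl)
      fix c assume "c \<in> {..<n}"
      then have c: "c < n" by simp
      have ic: "i*n+c < np*n" using i c by (rule idx_bound)
      have "(dmat (np*n) N (\<lambda>k. kron_vec (g k) (f k)) *\<^sub>v w) $ (i*n+c) = (\<Sum>k<N. kron_vec (g (Suc k)) (f (Suc k)) $ (i*n+c) * w $ k)"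
        by (rule dmat_vec_index[OF w ic])
      also have "\<dots> = (\<Sum>k<N. g (Suc k) $ i * f (Suc k) $ c * w $ k)"
      proof (intro sum.cong refl)
        fix k assume "k \<in> {..<N}"
        then have k: "k < N" by simp
        have dg: "dim_vec (g (Suc k)) = np" and df: "dim_vec (f (Suc k)) = n" using f[OF k] g[OF k] by auto
        show "kron_vec (g (Suc k)) (f (Suc k)) $ (i*n+c) * w $ k = g (Suc k) $ i * f (Suc k) $ c * w $ k"
          using ic c by (simp add: dg df)
      qed
      finally show "M (Suc i) $$ (r,c) * (dmat (np*n) N (\<lambda>k. kron_vec (g k) (f k)) *\<^sub>v w) $ (i*n+c)
          = M (Suc i) $$ (r,c) * (\<Sum>k<N. g (Suc k) $ i * f (Suc k) $ c * w $ k)" by simp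
    qed
    also have "\<dots> = (\<Sum>k<N. w $ k * g (Suc k) $ i * (\<Sum>c<n. M (Suc i) $$ (r,c) * f (Suc k) $ c))"
      by (simp add: sum_distrib_left sum.swap[of _ "{..<n}" "{..<N}"] mult_ac)
    also have "\<dots> = (\<Sum>k<N. w $ k * g (Suc k) $ i * (M (Suc i) *\<^sub>v f (Suc k)) $ r)"
      using Mi r f by (intro sum.cong refl) (simp add: mult_vec_sum del: index_mult_mat_vec)
    finally show "(\<Sum>k<N. w $ k * g (Suc k) $ i * (M (Suc i) *\<^sub>v f (Suc k)) $ r)
       = (M (Suc i) *\<^sub>v blk n (dmat (np*n) N (\<lambda>k. kron_vec (g k) (f k)) *\<^sub>v w) i) $ r" by simp
  qed
  finally show ?thesis .
qed

locale lpv =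
  fixes nx nu np Nd :: nat
    and S :: "real vec set"
    and A B :: "nat \<Rightarrow> real mat"
    and ud pd xd :: "nat \<Rightarrow> real vec"
    and P F FQ Y0 Ybar Xi :: "real mat"
  assumes S: "sched_set np S"
    and A: "\<forall>i\<le>np. A i \<in> carrier_mat nx nx"
    and B: "\<forall>i\<le>np. B i \<in> carrier_mat nx nu"
    and data_dims: "\<forall>k\<in>{1..Nd}. xd k \<in> carrier_vec nx \<and> ud k \<in> carrier_vec nu \<and> pd k \<in> S"
    and data_traj: "\<forall>k\<in>{1..<Nd}. xd (Suc k) = aff A (pd k) np *\<^sub>v xd k + aff B (pd k) np *\<^sub>v ud k"
    and rank: "let Dp = dmat nx (Nd - 1) xd
                   @\<^sub>r dmat (np * nx) (Nd - 1) (\<lambda>k. kron_vec (pd k) (xd k))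
                   @\<^sub>r dmat nu (Nd - 1) ud
                   @\<^sub>r dmat (np * nu) (Nd - 1) (\<lambda>k. kron_vec (pd k) (ud k))
               in vec_space.rank (dim_row Dp) Dp = (1 + np) * (nx + nu)"
    and P: "pos_def nx P"
    and F: "F \<in> carrier_mat (Nd - 1) (nx * (1 + np + np * np))"
    and FQ: "FQ \<in> carrier_mat ((Nd - 1) * (1 + np)) (nx * (1 + np))"
    and F_FQ: "\<forall>p\<in>S. F * (1\<^sub>m nx @\<^sub>r kron (colmat p) (1\<^sub>m nx) @\<^sub>r kron (kron (colmat p) (colmat p)) (1\<^sub>m nx))
                 = transpose_mat (1\<^sub>m (Nd - 1) @\<^sub>r kron (colmat p) (1\<^sub>m (Nd - 1))) * FQ
                   * (1\<^sub>m nx @\<^sub>r kron (colmat p) (1\<^sub>m nx))"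
    and Y0: "Y0 \<in> carrier_mat nu nx"
    and Ybar: "Ybar \<in> carrier_mat nu (nx * np)"
    and Xi: "sym_mat (4 * np * nx) Xi"
    and DpF: "(P @\<^sub>h 0\<^sub>m nx (np * nx) @\<^sub>h 0\<^sub>m nx (np * np * nx))
              @\<^sub>r (0\<^sub>m (np * nx) nx @\<^sub>h kron (1\<^sub>m np) P @\<^sub>h 0\<^sub>m (np * nx) (np * np * nx))
              @\<^sub>r (Y0 @\<^sub>h Ybar @\<^sub>h 0\<^sub>m nu (np * np * nx))
              @\<^sub>r (0\<^sub>m (np * nu) nx @\<^sub>h kron (1\<^sub>m np) Y0 @\<^sub>h kron (1\<^sub>m np) Ybar)
            = (dmat nx (Nd - 1) xd
               @\<^sub>r dmat (np * nx) (Nd - 1) (\<lambda>k. kron_vec (pd k) (xd k))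
               @\<^sub>r dmat nu (Nd - 1) ud
               @\<^sub>r dmat (np * nu) (Nd - 1) (\<lambda>k. kron_vec (pd k) (ud k))) * F"
    and LMI1: "let Xplus = dmat nx (Nd - 1) (\<lambda>k. xd (Suc k));
                   XF = blkdiag Xplus (kron (1\<^sub>m np) Xplus) * FQ;
                   P0 = blkdiag P (0\<^sub>m (nx * np) (nx * np));
                   W = (P0 @\<^sub>h XF) @\<^sub>r (transpose_mat XF @\<^sub>h P0);
                   L11 = 0\<^sub>m (2 * nx * np) (2 * nx * np);
                   L12 = kron (ones np) (1\<^sub>m (2 * nx));
                   L21 = 0\<^sub>m nx (2 * nx * np)
                         @\<^sub>r kron (1\<^sub>m np) (1\<^sub>m nx @\<^sub>h 0\<^sub>m nx nx)
                         @\<^sub>r 0\<^sub>m nx (2 * nx * np)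
                         @\<^sub>r kron (1\<^sub>m np) (0\<^sub>m nx nx @\<^sub>h 1\<^sub>m nx);
                   L22 = (1\<^sub>m nx @\<^sub>h 0\<^sub>m nx nx)
                         @\<^sub>r kron (ones np) (0\<^sub>m nx (2 * nx))
                         @\<^sub>r (0\<^sub>m nx nx @\<^sub>h 1\<^sub>m nx)
                         @\<^sub>r kron (ones np) (0\<^sub>m nx (2 * nx));
                   M1 = (L11 @\<^sub>h L12) @\<^sub>r (1\<^sub>m (2 * nx * np) @\<^sub>h 0\<^sub>m (2 * nx * np) (2 * nx));
                   M2 = L21 @\<^sub>h L22
               in neg_def (2 * nx * np + 2 * nx)
                    (transpose_mat M1 * Xi * M1 - transpose_mat M2 * W * M2)"
    and LMI2: "\<forall>p\<in>S. let G = 1\<^sub>m (2 * nx * np) @\<^sub>r kron (diagm p) (1\<^sub>m (2 * nx))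
                      in psd (2 * nx * np) (transpose_mat G * Xi * G)"

begin

definition "N = Nd - 1"
definition "Xp = dmat nx N (\<lambda>k. xd (Suc k))"
definition "Xd = dmat nx N xd"
definition "XPd = dmat (np * nx) N (\<lambda>k. kron_vec (pd k) (xd k))"
definition "Ud = dmat nu N ud"
definition "UPd = dmat (np * nu) N (\<lambda>k. kron_vec (pd k) (ud k))"
definition "theta y0 y1 y2 y3 = vec nx (\<lambda>r. ((A 0 *\<^sub>v y0) $ r + (\<Sum>i<np. (A (Suc i) *\<^sub>v blk nx y1 i) $ r))
      + ((B 0 *\<^sub>v y2) $ r + (\<Sum>i<np. (B (Suc i) *\<^sub>v blk nu y3 i) $ r)))"

lemma S_carrier: "S \<subseteq> carrier_vec np" using S unfolding sched_set_def by simp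

lemma pd_carrier: "k \<in> {1..Nd} \<Longrightarrow> pd k \<in> carrier_vec np" using data_dims S_carrier by blast
lemma xd_carrier: "k \<in> {1..Nd} \<Longrightarrow> xd k \<in> carrier_vec nx" using data_dims by blast
lemma ud_carrier: "k \<in> {1..Nd} \<Longrightarrow> ud k \<in> carrier_vec nu" using data_dims by blast

lemma data_rep: assumes w: "w \<in> carrier_vec N"
  shows "Xp *\<^sub>v w = theta (Xd *\<^sub>v w) (XPd *\<^sub>v w) (Ud *\<^sub>v w) (UPd *\<^sub>v w)"
proof (rule eq_vecI)
  show "dim_vec (Xp *\<^sub>v w) = dim_vec (theta (Xd *\<^sub>v w) (XPd *\<^sub>v w) (Ud *\<^sub>v w) (UPd *\<^sub>v w))"
    unfolding Xp_def theta_def by simp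
  fix r assume "r < dim_vec (theta (Xd *\<^sub>v w) (XPd *\<^sub>v w) (Ud *\<^sub>v w) (UPd *\<^sub>v w))"
  then have r: "r < nx" unfolding theta_def by simp
  have kr: "\<And>k. k < N \<Longrightarrow> Suc k \<in> {1..Nd}" unfolding N_def by auto
  have xc: "\<And>k. k < N \<Longrightarrow> xd (Suc k) \<in> carrier_vec nx" using xd_carrier kr by blast
  have uc: "\<And>k. k < N \<Longrightarrow> ud (Suc k) \<in> carrier_vec nu" using ud_carrier kr by blast
  have pc: "\<And>k. k < N \<Longrightarrow> pd (Suc k) \<in> carrier_vec np" using pd_carrier kr by blast
  have Ac: "\<And>k. k < N \<Longrightarrow> aff A (pd (Suc k)) np \<in> carrier_mat nx nx" using A by (intro aff_carrier) auto
  have Bc: "\<And>k. k < N \<Longrightarrow> aff B (pd (Suc k)) np \<in> carrier_mat nx nu" using B by (intro aff_carrier) auto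
  have traj: "\<And>k. k < N \<Longrightarrow> xd (Suc (Suc k)) = aff A (pd (Suc k)) np *\<^sub>v xd (Suc k) + aff B (pd (Suc k)) np *\<^sub>v ud (Suc k)"
  proof -
    fix k assume k: "k < N"
    then have "Suc k \<in> {1..<Nd}" unfolding N_def by auto
    then show "xd (Suc (Suc k)) = aff A (pd (Suc k)) np *\<^sub>v xd (Suc k) + aff B (pd (Suc k)) np *\<^sub>v ud (Suc k)"
      using data_traj by blast
  qed
  have "(Xp *\<^sub>v w) $ r = (\<Sum>k<N. xd (Suc (Suc k)) $ r * w $ k)"
    unfolding Xp_def by (rule dmat_vec_index[OF w r])
  also have "\<dots> = (\<Sum>k<N. w $ k * (aff A (pd (Suc k)) np *\<^sub>v xd (Suc k)) $ r)
                 + (\<Sum>k<N. w $ k * (aff B (pd (Suc k)) np *\<^sub>v ud (Suc k)) $ r)"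
  proof -
    have "\<And>k. k < N \<Longrightarrow> xd (Suc (Suc k)) $ r * w $ k = w $ k * (aff A (pd (Suc k)) np *\<^sub>v xd (Suc k)) $ r
                 + w $ k * (aff B (pd (Suc k)) np *\<^sub>v ud (Suc k)) $ r"
    proof -
      fix k assume k: "k < N"
      have d: "dim_vec (aff B (pd (Suc k)) np *\<^sub>v ud (Suc k)) = nx" using Bc[OF k] by simp
      show "xd (Suc (Suc k)) $ r * w $ k = w $ k * (aff A (pd (Suc k)) np *\<^sub>v xd (Suc k)) $ r
                 + w $ k * (aff B (pd (Suc k)) np *\<^sub>v ud (Suc k)) $ r"
        unfolding traj[OF k] using r d by (simp add: algebra_simps)
    qed
    then show ?thesis by (simp add: sum.distrib)
  qed
  also have "(\<Sum>k<N. w $ k * (aff A (pd (Suc k)) np *\<^sub>v xd (Suc k)) $ r)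
      = (A 0 *\<^sub>v (Xd *\<^sub>v w)) $ r + (\<Sum>i<np. (A (Suc i) *\<^sub>v blk nx (XPd *\<^sub>v w) i) $ r)"
    unfolding Xd_def XPd_def by (rule data_generic[where M=A and f=xd and g=pd and n=nx, OF A xc pc w r])
  also have "(\<Sum>k<N. w $ k * (aff B (pd (Suc k)) np *\<^sub>v ud (Suc k)) $ r)
      = (B 0 *\<^sub>v (Ud *\<^sub>v w)) $ r + (\<Sum>i<np. (B (Suc i) *\<^sub>v blk nu (UPd *\<^sub>v w) i) $ r)"
    unfolding Ud_def UPd_def by (rule data_generic[where M=B and f=ud and g=pd and n=nu, OF B uc pc w r])
  finally show "(Xp *\<^sub>v w) $ r = theta (Xd *\<^sub>v w) (XPd *\<^sub>v w) (Ud *\<^sub>v w) (UPd *\<^sub>v w) $ r"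
    unfolding theta_def using r by simp
qed

end

lemma hcat3_vec: assumes A: "A \<in> carrier_mat r c1" and B: "B \<in> carrier_mat r c2" and C: "C \<in> carrier_mat r c3"
  and a: "a \<in> carrier_vec c1" and b: "b \<in> carrier_vec c2" and c: "c \<in> carrier_vec c3"
  shows "(A @\<^sub>h B @\<^sub>h C) *\<^sub>v (a @\<^sub>v b @\<^sub>v c) = A *\<^sub>v a + (B *\<^sub>v b + C *\<^sub>v c)"
proof -
  have BC: "B @\<^sub>h C \<in> carrier_mat r (c2+c3)" using B C by (rule hcat_carrier)
  have bc: "b @\<^sub>v c \<in> carrier_vec (c2+c3)" using b c by (rule append_carrier_vec)
  show ?thesis unfolding hcat_mult_vec[OF A BC a bc] hcat_mult_vec[OF B C b c] ..
qed

lemma rows4_vec: assumes R1: "(R1::real mat) \<in> carrier_mat r1 c" and R2: "R2 \<in> carrier_mat r2 c"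
  and R3: "R3 \<in> carrier_mat r3 c" and R4: "R4 \<in> carrier_mat r4 c"
  and z: "z \<in> carrier_vec c"
  shows "(R1 @\<^sub>r R2 @\<^sub>r R3 @\<^sub>r R4) *\<^sub>v z = (R1 *\<^sub>v z) @\<^sub>v (R2 *\<^sub>v z) @\<^sub>v (R3 *\<^sub>v z) @\<^sub>v (R4 *\<^sub>v z)"
proof -
  have R34: "R3 @\<^sub>r R4 \<in> carrier_mat (r3+r4) c" using R3 R4 by (rule carrier_append_rows)
  have R234: "R2 @\<^sub>r R3 @\<^sub>r R4 \<in> carrier_mat (r2+(r3+r4)) c" using R2 R34 by (rule carrier_append_rows)
  show ?thesis unfolding mat_mult_append[OF R1 R234 z] mat_mult_append[OF R2 R34 z] mat_mult_append[OF R3 R4 z] ..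
qed

lemma app4_eq: assumes "a \<in> carrier_vec n1" "a' \<in> carrier_vec n1" "b \<in> carrier_vec n2" "b' \<in> carrier_vec n2"
    "c \<in> carrier_vec n3" "c' \<in> carrier_vec n3"
  and e: "a @\<^sub>v b @\<^sub>v c @\<^sub>v d = a' @\<^sub>v b' @\<^sub>v c' @\<^sub>v d'"
  shows "a = a' \<and> b = b' \<and> c = c' \<and> d = d'"
  using e assms by (simp add: append_vec_eq)

lemma kcol_carrier: "p \<in> carrier_vec m \<Longrightarrow> kron (colmat p) (1\<^sub>m n) \<in> carrier_mat (m*n) n"
  using kron_carrier[of "colmat p" "1\<^sub>m n"] by (simp add: carrier_vecD)

lemma kcol2_carrier: "p \<in> carrier_vec m \<Longrightarrow> kron (kron (colmat p) (colmat p)) (1\<^sub>m n) \<in> carrier_mat (m*m*n) n"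
  using kron_carrier[of "kron (colmat p) (colmat p)" "1\<^sub>m n"] by (simp add: carrier_vecD)

lemma kron_vec_add: assumes p: "p \<in> carrier_vec m" and a: "a \<in> carrier_vec n" and b: "b \<in> carrier_vec n"
  shows "kron_vec p a + kron_vec p b = kron_vec p (a + b)"
proof (rule eq_vecI)
  have [simp]: "dim_vec a = n" "dim_vec b = n" "dim_vec p = m" using a b p by auto
  fix j assume "j < dim_vec (kron_vec p (a + b))"
  then have j: "j < m * n" by simp
  then have "n > 0" by (cases n) auto
  then show "(kron_vec p a + kron_vec p b) $ j = kron_vec p (a + b) $ j" using j by (simp add: algebra_simps)
qed (use a b in simp)

context lpv begin

definition "K0 = Y0 * minv P"
definition "Kbar = Ybar * minv (kron (1\<^sub>m np) P)"
definition "Kf = (\<lambda>i. if i = 0 then K0 else mat nu nx (\<lambda>(r, c). Kbar $$ (r, (i - 1) * nx + c)))"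
definition "Acl p = aff A p np + aff B p np * aff Kf p np"
definition "Pix p = 1\<^sub>m nx @\<^sub>r kron (colmat p) (1\<^sub>m nx)"
definition "PiN p = 1\<^sub>m N @\<^sub>r kron (colmat p) (1\<^sub>m N)"
definition "Pi3 p = 1\<^sub>m nx @\<^sub>r kron (colmat p) (1\<^sub>m nx) @\<^sub>r kron (kron (colmat p) (colmat p)) (1\<^sub>m nx)"
definition "XF = blkdiag Xp (kron (1\<^sub>m np) Xp) * FQ"

lemma Pc: "P \<in> carrier_mat nx nx" using P unfolding pos_def_def sym_mat_def by simp
lemma P_inj: "v \<in> carrier_vec nx \<Longrightarrow> P *\<^sub>v v = 0\<^sub>v nx \<Longrightarrow> v = 0\<^sub>v nx" using pos_def_inj[OF P] by blast
lemma Pinv: "minv P \<in> carrier_mat nx nx" "P * minv P = 1\<^sub>m nx" "minv P * P = 1\<^sub>m nx"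
  using minv_props[OF Pc P_inj] by auto

lemma KP_c: "kron (1\<^sub>m np) P \<in> carrier_mat (np*nx) (np*nx)" by (rule kron_I_carrier[OF Pc])

lemma KP_inj: assumes w: "w \<in> carrier_vec (np*nx)" and z: "kron (1\<^sub>m np) P *\<^sub>v w = 0\<^sub>v (np*nx)"
  shows "w = 0\<^sub>v (np*nx)"
proof (rule vec_eq_blocks[of _ np nx])
  show "w \<in> carrier_vec (np * nx)" "0\<^sub>v (np * nx) \<in> carrier_vec (np * nx)" using w by auto
  fix i r assume i: "i < np" and r: "r < nx"
  have "P *\<^sub>v blk nx w i = 0\<^sub>v nx"
  proof (rule eq_vecI)
    fix s assume "s < dim_vec (0\<^sub>v nx)"
    then have s: "s < nx" by simp
    have "(P *\<^sub>v blk nx w i) $ s = (kron (1\<^sub>m np) P *\<^sub>v w) $ (i*nx+s)"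
      using kron_I_vec_index[OF Pc w i s] by simp
    also have "\<dots> = 0" unfolding z using idx_bound[OF i s] by simp
    finally show "(P *\<^sub>v blk nx w i) $ s = 0\<^sub>v nx $ s" using s by simp
  qed (use Pc in simp)
  then have "blk nx w i = 0\<^sub>v nx" using P_inj by simp
  then have "blk nx w i $ r = 0" using r by simp
  then show "w $ (i*nx+r) = 0\<^sub>v (np*nx) $ (i*nx+r)" using r idx_bound[OF i r] by simp
qed

lemma KPinv: "minv (kron (1\<^sub>m np) P) \<in> carrier_mat (np*nx) (np*nx)"
  "kron (1\<^sub>m np) P * minv (kron (1\<^sub>m np) P) = 1\<^sub>m (np*nx)"
  "minv (kron (1\<^sub>m np) P) * kron (1\<^sub>m np) P = 1\<^sub>m (np*nx)"
  using minv_props[OF KP_c KP_inj] by auto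

lemma Ybar_c: "Ybar \<in> carrier_mat nu (np*nx)" using Ybar by (simp add: mult.commute)

lemma Kbar_c: "Kbar \<in> carrier_mat nu (np*nx)"
  unfolding Kbar_def using Ybar_c KPinv(1) by simp

lemma Kbar_KP: "Kbar * kron (1\<^sub>m np) P = Ybar"
proof -
  have "Kbar * kron (1\<^sub>m np) P = Ybar * (minv (kron (1\<^sub>m np) P) * kron (1\<^sub>m np) P)"
    unfolding Kbar_def using assoc_mult_mat[OF Ybar_c KPinv(1) KP_c] .
  also have "\<dots> = Ybar" unfolding KPinv(3) using Ybar_c by simp
  finally show ?thesis .
qed

lemma K0_c: "K0 \<in> carrier_mat nu nx" unfolding K0_def using Y0 Pinv(1) by simp

lemma Kf_c: "Kf i \<in> carrier_mat nu nx" unfolding Kf_def using K0_c by simp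

lemma aff_K: assumes p: "p \<in> carrier_vec np" and v: "v \<in> carrier_vec nx"
  shows "aff Kf p np *\<^sub>v (P *\<^sub>v v) = Y0 *\<^sub>v v + Ybar *\<^sub>v kron_vec p v"
proof (rule eq_vecI)
  have Kc: "\<forall>i\<le>np. Kf i \<in> carrier_mat nu nx" using Kf_c by simp
  have Pv: "P *\<^sub>v v \<in> carrier_vec nx" using Pc v by simp
  have kv: "kron_vec p v \<in> carrier_vec (np*nx)" by (rule kron_vec_carrier[OF p v])
  show "dim_vec (aff Kf p np *\<^sub>v (P *\<^sub>v v)) = dim_vec (Y0 *\<^sub>v v + Ybar *\<^sub>v kron_vec p v)"
    using carrier_matD[OF aff_carrier[OF Kc, of p]] carrier_matD[OF Ybar_c] by simp
  fix r assume "r < dim_vec (Y0 *\<^sub>v v + Ybar *\<^sub>v kron_vec p v)"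
  then have r: "r < nu" using Ybar_c by simp
  have "(aff Kf p np *\<^sub>v (P *\<^sub>v v)) $ r = (Kf 0 *\<^sub>v (P *\<^sub>v v)) $ r + (\<Sum>i<np. p $ i * (Kf (Suc i) *\<^sub>v (P *\<^sub>v v)) $ r)"
    by (rule aff_mult_vec_index[OF Kc Pv r])
  also have "Kf 0 *\<^sub>v (P *\<^sub>v v) = Y0 *\<^sub>v v"
  proof -
    have "Kf 0 *\<^sub>v (P *\<^sub>v v) = Y0 *\<^sub>v (minv P *\<^sub>v (P *\<^sub>v v))"
      unfolding Kf_def K0_def using Y0 Pinv(1) Pv by (simp add: assoc_mult_mat_vec)
    also have "minv P *\<^sub>v (P *\<^sub>v v) = v"
      using assoc_mult_mat_vec[OF Pinv(1) Pc v, symmetric] Pinv(3) v by simp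
    finally show ?thesis .
  qed
  also have "(\<Sum>i<np. p $ i * (Kf (Suc i) *\<^sub>v (P *\<^sub>v v)) $ r) = (Kbar *\<^sub>v kron_vec p (P *\<^sub>v v)) $ r"
    using colblk_vec[OF Kbar_c p Pv r] unfolding Kf_def by simp
  also have "kron_vec p (P *\<^sub>v v) = kron (1\<^sub>m np) P *\<^sub>v kron_vec p v"
    using kron_I_kron_vec[OF Pc p v] by simp
  also have "Kbar *\<^sub>v (kron (1\<^sub>m np) P *\<^sub>v kron_vec p v) = Ybar *\<^sub>v kron_vec p v"
    using assoc_mult_mat_vec[OF Kbar_c KP_c kv, symmetric] unfolding Kbar_KP .
  finally show "(aff Kf p np *\<^sub>v (P *\<^sub>v v)) $ r = (Y0 *\<^sub>v v + Ybar *\<^sub>v kron_vec p v) $ r"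
    using r Ybar_c by simp
qed

end

context lpv begin

lemma FQc: "FQ \<in> carrier_mat (N + np*N) (nx + np*nx)"
proof -
  have "FQ \<in> carrier_mat (N*(1+np)) (nx*(1+np))" using FQ unfolding N_def .
  moreover have e: "N*(1+np) = N + np*N" "nx*(1+np) = nx + np*nx" by (simp_all add: algebra_simps)
  ultimately show ?thesis by (simp only: e)
qed

lemma Fc: "F \<in> carrier_mat N (nx + (np*nx + np*np*nx))"
proof -
  have "F \<in> carrier_mat N (nx*(1+np+np*np))" using F unfolding N_def .
  moreover have e: "nx*(1+np+np*np) = nx + (np*nx + np*np*nx)" by (simp add: algebra_simps)
  ultimately show ?thesis by (simp only: e)
qed

lemma Xp_c: "Xp \<in> carrier_mat nx N" unfolding Xp_def by (rule dmat_carrier)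
lemma KXp_c: "kron (1\<^sub>m np) Xp \<in> carrier_mat (np*nx) (np*N)" by (rule kron_I_carrier[OF Xp_c])
lemma BLK_c: "blkdiag Xp (kron (1\<^sub>m np) Xp) \<in> carrier_mat (nx + np*nx) (N + np*N)"
  by (rule blkdiag_carrier[OF Xp_c KXp_c])
lemma XF_c: "XF \<in> carrier_mat (nx + np*nx) (nx + np*nx)"
  unfolding XF_def using BLK_c FQc by simp

lemma Pix_c: "p \<in> carrier_vec np \<Longrightarrow> Pix p \<in> carrier_mat (nx + np*nx) nx"
  unfolding Pix_def by (rule carrier_append_rows[OF one_carrier_mat kcol_carrier])
lemma PiN_c: "p \<in> carrier_vec np \<Longrightarrow> PiN p \<in> carrier_mat (N + np*N) N"
  unfolding PiN_def by (rule carrier_append_rows[OF one_carrier_mat kcol_carrier])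
lemma Pi3_c: "p \<in> carrier_vec np \<Longrightarrow> Pi3 p \<in> carrier_mat (nx + (np*nx + np*np*nx)) nx"
  unfolding Pi3_def by (rule carrier_append_rows[OF one_carrier_mat carrier_append_rows[OF kcol_carrier kcol2_carrier]])

lemma Pix_vec: assumes p: "p \<in> carrier_vec np" and v: "v \<in> carrier_vec nx"
  shows "Pix p *\<^sub>v v = v @\<^sub>v kron_vec p v"
  unfolding Pix_def mat_mult_append[OF one_carrier_mat kcol_carrier[OF p] v] kron_col_vec[OF v] using v by simp

lemma Pi3_vec: assumes p: "p \<in> carrier_vec np" and v: "v \<in> carrier_vec nx"
  shows "Pi3 p *\<^sub>v v = v @\<^sub>v kron_vec p v @\<^sub>v kron_vec p (kron_vec p v)"
proof -
  have c23: "kron (colmat p) (1\<^sub>m nx) @\<^sub>r kron (kron (colmat p) (colmat p)) (1\<^sub>m nx) \<in> carrier_mat (np*nx + np*np*nx) nx"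
    by (rule carrier_append_rows[OF kcol_carrier[OF p] kcol2_carrier[OF p]])
  show ?thesis unfolding Pi3_def mat_mult_append[OF one_carrier_mat c23 v]
      mat_mult_append[OF kcol_carrier[OF p] kcol2_carrier[OF p] v] kron_col_vec[OF v] kron_col2_vec[OF p p v]
    using v by simp
qed

lemma lhs_general: assumes p: "p \<in> carrier_vec np" and w: "w \<in> carrier_vec (N + np*N)"
  shows "transpose_mat (Pix p) *\<^sub>v (blkdiag Xp (kron (1\<^sub>m np) Xp) *\<^sub>v w) = Xp *\<^sub>v (transpose_mat (PiN p) *\<^sub>v w)"
proof -
  have dp[simp]: "dim_vec p = np" using p by simp
  define w0 where "w0 = vec_first w N"
  define w1 where "w1 = vec_last w (np*N)"
  have w0c: "w0 \<in> carrier_vec N" and w1c: "w1 \<in> carrier_vec (np*N)" unfolding w0_def w1_def by auto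
  have ww: "w = w0 @\<^sub>v w1" unfolding w0_def w1_def using vec_first_last_append[OF w] by simp
  have Xw0: "Xp *\<^sub>v w0 \<in> carrier_vec nx" using Xp_c w0c by simp
  have Kw1: "kron (1\<^sub>m np) Xp *\<^sub>v w1 \<in> carrier_vec (np*nx)" using KXp_c w1c by simp
  have L: "transpose_mat (Pix p) *\<^sub>v (blkdiag Xp (kron (1\<^sub>m np) Xp) *\<^sub>v w)
      = Xp *\<^sub>v w0 + vec nx (\<lambda>r. \<Sum>i<np. p $ i * (kron (1\<^sub>m np) Xp *\<^sub>v w1) $ (i*nx+r))"
    unfolding ww blkdiag_mult_vec[OF Xp_c KXp_c w0c w1c] Pix_def
      transpose_append_rows_vec[OF one_carrier_mat kcol_carrier[OF p] Xw0 Kw1]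
      kron_colT_vec[of _ p, unfolded dp, OF Kw1]
    using Xw0 by simp
  have R: "transpose_mat (PiN p) *\<^sub>v w = w0 + vec N (\<lambda>c. \<Sum>i<np. p $ i * w1 $ (i*N+c))"
    unfolding ww PiN_def transpose_append_rows_vec[OF one_carrier_mat kcol_carrier[OF p] w0c w1c]
      kron_colT_vec[of _ p, unfolded dp, OF w1c]
    using w0c by simp
  have vc: "vec N (\<lambda>c. \<Sum>i<np. p $ i * w1 $ (i*N+c)) \<in> carrier_vec N" by simp
  have E: "vec nx (\<lambda>r. \<Sum>i<np. p $ i * (kron (1\<^sub>m np) Xp *\<^sub>v w1) $ (i*nx+r)) = Xp *\<^sub>v vec N (\<lambda>c. \<Sum>i<np. p $ i * w1 $ (i*N+c))"
  proof (rule eq_vecI)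
    fix r assume "r < dim_vec (Xp *\<^sub>v vec N (\<lambda>c. \<Sum>i<np. p $ i * w1 $ (i*N+c)))"
    then have r: "r < nx" using Xp_c by simp
    have "(\<Sum>i<np. p $ i * (kron (1\<^sub>m np) Xp *\<^sub>v w1) $ (i*nx+r)) = (\<Sum>i<np. p $ i * (Xp *\<^sub>v blk N w1 i) $ r)"
      using kron_I_vec_index[OF Xp_c w1c _ r] by simp
    also have "\<dots> = (\<Sum>i<np. p $ i * (\<Sum>c<N. Xp $$ (r,c) * w1 $ (i*N+c)))"
      using Xp_c r by (intro sum.cong refl) (simp add: mult_vec_sum del: index_mult_mat_vec)
    also have "\<dots> = (\<Sum>c<N. Xp $$ (r,c) * (\<Sum>i<np. p $ i * w1 $ (i*N+c)))"
      by (simp add: sum_distrib_left sum.swap[of _ "{..<np}" "{..<N}"] mult_ac)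
    also have "\<dots> = (Xp *\<^sub>v vec N (\<lambda>c. \<Sum>i<np. p $ i * w1 $ (i*N+c))) $ r"
      using Xp_c r by (simp add: mult_vec_sum del: index_mult_mat_vec)
    finally show "vec nx (\<lambda>r. \<Sum>i<np. p $ i * (kron (1\<^sub>m np) Xp *\<^sub>v w1) $ (i*nx+r)) $ r = (Xp *\<^sub>v vec N (\<lambda>c. \<Sum>i<np. p $ i * w1 $ (i*N+c))) $ r"
      using r by simp
  qed (use Xp_c in simp)
  show ?thesis unfolding L R E mult_add_distrib_mat_vec[OF Xp_c w0c vc] ..
qed

lemma lhs_rep: assumes p: "p \<in> carrier_vec np" and v: "v \<in> carrier_vec nx"
  shows "transpose_mat (Pix p) *\<^sub>v (XF *\<^sub>v (Pix p *\<^sub>v v)) = Xp *\<^sub>v (transpose_mat (PiN p) *\<^sub>v (FQ *\<^sub>v (Pix p *\<^sub>v v)))"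
proof -
  have u: "Pix p *\<^sub>v v \<in> carrier_vec (nx + np*nx)" using Pix_c[OF p] v by simp
  have w: "FQ *\<^sub>v (Pix p *\<^sub>v v) \<in> carrier_vec (N + np*N)" using FQc u by simp
  have "XF *\<^sub>v (Pix p *\<^sub>v v) = blkdiag Xp (kron (1\<^sub>m np) Xp) *\<^sub>v (FQ *\<^sub>v (Pix p *\<^sub>v v))"
    unfolding XF_def by (rule assoc_mult_mat_vec[OF BLK_c FQc u])
  then show ?thesis using lhs_general[OF p w] by simp
qed

lemma F_rep: assumes pS: "p \<in> S" and v: "v \<in> carrier_vec nx"
  shows "transpose_mat (PiN p) *\<^sub>v (FQ *\<^sub>v (Pix p *\<^sub>v v)) = F *\<^sub>v (Pi3 p *\<^sub>v v)"
proof -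
  have p: "p \<in> carrier_vec np" using pS S_carrier by blast
  have e: "F * Pi3 p = transpose_mat (PiN p) * FQ * Pix p"
    using F_FQ pS unfolding Pi3_def PiN_def Pix_def N_def by blast
  have T: "transpose_mat (PiN p) \<in> carrier_mat N (N + np*N)" using PiN_c[OF p] by simp
  have u: "Pix p *\<^sub>v v \<in> carrier_vec (nx + np*nx)" using Pix_c[OF p] v by simp
  have "F *\<^sub>v (Pi3 p *\<^sub>v v) = (F * Pi3 p) *\<^sub>v v" using assoc_mult_mat_vec[OF Fc Pi3_c[OF p] v] by simp
  also have "\<dots> = (transpose_mat (PiN p) * FQ) *\<^sub>v (Pix p *\<^sub>v v)"
    unfolding e by (rule assoc_mult_mat_vec[OF mult_carrier_mat[OF T FQc] Pix_c[OF p] v])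
  also have "\<dots> = transpose_mat (PiN p) *\<^sub>v (FQ *\<^sub>v (Pix p *\<^sub>v v))"
    by (rule assoc_mult_mat_vec[OF T FQc u])
  finally show ?thesis by simp
qed

end

lemma zmv: "x \<in> carrier_vec c \<Longrightarrow> 0\<^sub>m r c *\<^sub>v (x::real vec) = 0\<^sub>v r"
  by (intro eq_vecI) (auto simp: scalar_prod_def)

context lpv begin

definition "yv p v = Y0 *\<^sub>v v + Ybar *\<^sub>v kron_vec p v"

lemma yv_c: "p \<in> carrier_vec np \<Longrightarrow> v \<in> carrier_vec nx \<Longrightarrow> yv p v \<in> carrier_vec nu"
  unfolding yv_def using Y0 Ybar_c kron_vec_carrier[of p np v nx] by simp

lemma Xd_c: "Xd \<in> carrier_mat nx N" unfolding Xd_def by (rule dmat_carrier)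
lemma XPd_c: "XPd \<in> carrier_mat (np*nx) N" unfolding XPd_def by (rule dmat_carrier)
lemma Ud_c: "Ud \<in> carrier_mat nu N" unfolding Ud_def by (rule dmat_carrier)
lemma UPd_c: "UPd \<in> carrier_mat (np*nu) N" unfolding UPd_def by (rule dmat_carrier)

lemma Dp_rep: assumes p: "p \<in> carrier_vec np" and v: "v \<in> carrier_vec nx"
  shows "Xd *\<^sub>v (F *\<^sub>v (Pi3 p *\<^sub>v v)) = P *\<^sub>v v \<and> XPd *\<^sub>v (F *\<^sub>v (Pi3 p *\<^sub>v v)) = kron_vec p (P *\<^sub>v v)
       \<and> Ud *\<^sub>v (F *\<^sub>v (Pi3 p *\<^sub>v v)) = yv p v \<and> UPd *\<^sub>v (F *\<^sub>v (Pi3 p *\<^sub>v v)) = kron_vec p (yv p v)"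
proof -
  define z where "z = Pi3 p *\<^sub>v v"
  define kv where "kv = kron_vec p v"
  define kkv where "kkv = kron_vec p kv"
  have e3: "np*(np*nx) = np*np*nx" by (simp add: mult.assoc)
  have kvc: "kv \<in> carrier_vec (np*nx)" unfolding kv_def by (rule kron_vec_carrier[OF p v])
  have kkvc: "kkv \<in> carrier_vec (np*np*nx)" unfolding kkv_def using kron_vec_carrier[OF p kvc] e3 by simp
  have zz: "z = v @\<^sub>v kv @\<^sub>v kkv" unfolding z_def kv_def kkv_def by (rule Pi3_vec[OF p v])
  have zc: "z \<in> carrier_vec (nx + (np*nx + np*np*nx))" using Pi3_c[OF p] v unfolding z_def by simp
  have yc: "F *\<^sub>v z \<in> carrier_vec N" using Fc zc by simp
  define R1 where "R1 = P @\<^sub>h 0\<^sub>m nx (np * nx) @\<^sub>h 0\<^sub>m nx (np * np * nx)"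
  define R2 where "R2 = 0\<^sub>m (np * nx) nx @\<^sub>h kron (1\<^sub>m np) P @\<^sub>h 0\<^sub>m (np * nx) (np * np * nx)"
  define R3 where "R3 = Y0 @\<^sub>h Ybar @\<^sub>h 0\<^sub>m nu (np * np * nx)"
  define R4 where "R4 = 0\<^sub>m (np * nu) nx @\<^sub>h kron (1\<^sub>m np) Y0 @\<^sub>h kron (1\<^sub>m np) Ybar"
  have DpF': "R1 @\<^sub>r R2 @\<^sub>r R3 @\<^sub>r R4 = (Xd @\<^sub>r XPd @\<^sub>r Ud @\<^sub>r UPd) * F"
    using DpF unfolding R1_def R2_def R3_def R4_def Xd_def XPd_def Ud_def UPd_def N_def .
  have KY0: "kron (1\<^sub>m np) Y0 \<in> carrier_mat (np*nu) (np*nx)" by (rule kron_I_carrier[OF Y0])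
  have KYb: "kron (1\<^sub>m np) Ybar \<in> carrier_mat (np*nu) (np*np*nx)" using kron_I_carrier[OF Ybar_c, of np] e3 by simp
  have r1: "R1 *\<^sub>v z = P *\<^sub>v v" unfolding R1_def zz
    using hcat3_vec[OF Pc zero_carrier_mat zero_carrier_mat v kvc kkvc] v kvc kkvc Pc by (simp add: zmv)
  have r2: "R2 *\<^sub>v z = kron_vec p (P *\<^sub>v v)" unfolding R2_def zz
    using hcat3_vec[OF zero_carrier_mat KP_c zero_carrier_mat v kvc kkvc] v kvc kkvc KP_c
    by (simp add: zmv kron_I_kron_vec[OF Pc p v] kv_def kron_vec_carrier[OF p mult_mat_vec_carrier[OF Pc v]])
  have r3: "R3 *\<^sub>v z = yv p v" unfolding R3_def zz
    using hcat3_vec[OF Y0 Ybar_c zero_carrier_mat v kvc kkvc] v kvc kkvc Ybar_c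
    by (simp add: zmv yv_def kv_def mult_mat_vec_carrier[OF Ybar_c kvc])
  have r4: "R4 *\<^sub>v z = kron_vec p (yv p v)"
  proof -
    have a: "kron (1\<^sub>m np) Y0 *\<^sub>v kv = kron_vec p (Y0 *\<^sub>v v)" unfolding kv_def by (rule kron_I_kron_vec[OF Y0 p v])
    have b: "kron (1\<^sub>m np) Ybar *\<^sub>v kkv = kron_vec p (Ybar *\<^sub>v kv)" unfolding kkv_def by (rule kron_I_kron_vec[OF Ybar_c p kvc])
    have c: "kron_vec p (Y0 *\<^sub>v v) + kron_vec p (Ybar *\<^sub>v kv) = kron_vec p (yv p v)"
      unfolding yv_def kv_def by (rule kron_vec_add[OF p mult_mat_vec_carrier[OF Y0 v] mult_mat_vec_carrier[OF Ybar_c kvc[unfolded kv_def]]])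
    show ?thesis unfolding R4_def zz
      using hcat3_vec[OF zero_carrier_mat KY0 KYb v kvc kkvc] v kvc kkvc KY0 KYb a b c
      by (simp add: zmv kron_vec_carrier[OF p yv_c[OF p v]])
  qed
  have R1c: "R1 \<in> carrier_mat nx (nx + (np*nx + np*np*nx))" unfolding R1_def
    by (intro hcat_carrier Pc zero_carrier_mat)
  have R2c: "R2 \<in> carrier_mat (np*nx) (nx + (np*nx + np*np*nx))" unfolding R2_def
    by (intro hcat_carrier KP_c zero_carrier_mat)
  have R3c: "R3 \<in> carrier_mat nu (nx + (np*nx + np*np*nx))" unfolding R3_def
    by (intro hcat_carrier Y0 Ybar_c zero_carrier_mat)
  have R4c: "R4 \<in> carrier_mat (np*nu) (nx + (np*nx + np*np*nx))" unfolding R4_def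
    by (intro hcat_carrier KY0 KYb zero_carrier_mat)
  have Dc: "Xd @\<^sub>r XPd @\<^sub>r Ud @\<^sub>r UPd \<in> carrier_mat (nx + (np*nx + (nu + np*nu))) N"
    by (intro carrier_append_rows Xd_c XPd_c Ud_c UPd_c)
  have "(Xd *\<^sub>v (F *\<^sub>v z)) @\<^sub>v (XPd *\<^sub>v (F *\<^sub>v z)) @\<^sub>v (Ud *\<^sub>v (F *\<^sub>v z)) @\<^sub>v (UPd *\<^sub>v (F *\<^sub>v z))
      = (Xd @\<^sub>r XPd @\<^sub>r Ud @\<^sub>r UPd) *\<^sub>v (F *\<^sub>v z)"
    by (rule rows4_vec[OF Xd_c XPd_c Ud_c UPd_c yc, symmetric])
  also have "\<dots> = ((Xd @\<^sub>r XPd @\<^sub>r Ud @\<^sub>r UPd) * F) *\<^sub>v z"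
    by (rule assoc_mult_mat_vec[OF Dc Fc zc, symmetric])
  also have "\<dots> = (R1 @\<^sub>r R2 @\<^sub>r R3 @\<^sub>r R4) *\<^sub>v z" unfolding DpF' ..
  also have "\<dots> = (P *\<^sub>v v) @\<^sub>v kron_vec p (P *\<^sub>v v) @\<^sub>v yv p v @\<^sub>v kron_vec p (yv p v)"
    unfolding rows4_vec[OF R1c R2c R3c R4c zc] r1 r2 r3 r4 ..
  finally have E: "(Xd *\<^sub>v (F *\<^sub>v z)) @\<^sub>v (XPd *\<^sub>v (F *\<^sub>v z)) @\<^sub>v (Ud *\<^sub>v (F *\<^sub>v z)) @\<^sub>v (UPd *\<^sub>v (F *\<^sub>v z))
      = (P *\<^sub>v v) @\<^sub>v kron_vec p (P *\<^sub>v v) @\<^sub>v yv p v @\<^sub>v kron_vec p (yv p v)" .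
  have Pvc: "P *\<^sub>v v \<in> carrier_vec nx" using Pc v by simp
  show ?thesis unfolding z_def[symmetric]
    by (rule app4_eq[OF _ _ _ _ _ _ E]) (use Xd_c XPd_c Ud_c yc Pvc yv_c[OF p v] kron_vec_carrier[OF p Pvc] in auto)
qed

lemma theta_kron: assumes p: "p \<in> carrier_vec np" and y0: "y0 \<in> carrier_vec nx" and y2: "y2 \<in> carrier_vec nu"
  shows "theta y0 (kron_vec p y0) y2 (kron_vec p y2) = aff A p np *\<^sub>v y0 + aff B p np *\<^sub>v y2"
proof (rule eq_vecI)
  have Ac: "aff A p np \<in> carrier_mat nx nx" using A by (rule aff_carrier)
  have Bc: "aff B p np \<in> carrier_mat nx nu" using B by (rule aff_carrier)
  show "dim_vec (theta y0 (kron_vec p y0) y2 (kron_vec p y2)) = dim_vec (aff A p np *\<^sub>v y0 + aff B p np *\<^sub>v y2)"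
    unfolding theta_def using Bc by simp
  fix r assume "r < dim_vec (aff A p np *\<^sub>v y0 + aff B p np *\<^sub>v y2)"
  then have r: "r < nx" using Bc by simp
  have dp: "dim_vec p = np" using p by simp
  have ba: "\<And>i. i < np \<Longrightarrow> (A (Suc i) *\<^sub>v blk nx (kron_vec p y0) i) $ r = p $ i * (A (Suc i) *\<^sub>v y0) $ r"
  proof -
    fix i assume i: "i < np"
    have Ai: "A (Suc i) \<in> carrier_mat nx nx" using A i by simp
    show "(A (Suc i) *\<^sub>v blk nx (kron_vec p y0) i) $ r = p $ i * (A (Suc i) *\<^sub>v y0) $ r"
      using blk_kron_vec[of i p y0 nx] i dp y0 mult_mat_vec[OF Ai y0] Ai r by simp
  qed
  have bb: "\<And>i. i < np \<Longrightarrow> (B (Suc i) *\<^sub>v blk nu (kron_vec p y2) i) $ r = p $ i * (B (Suc i) *\<^sub>v y2) $ r"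
  proof -
    fix i assume i: "i < np"
    have Bi: "B (Suc i) \<in> carrier_mat nx nu" using B i by simp
    show "(B (Suc i) *\<^sub>v blk nu (kron_vec p y2) i) $ r = p $ i * (B (Suc i) *\<^sub>v y2) $ r"
      using blk_kron_vec[of i p y2 nu] i dp y2 mult_mat_vec[OF Bi y2] Bi r by simp
  qed
  have "theta y0 (kron_vec p y0) y2 (kron_vec p y2) $ r
     = ((A 0 *\<^sub>v y0) $ r + (\<Sum>i<np. p $ i * (A (Suc i) *\<^sub>v y0) $ r)) + ((B 0 *\<^sub>v y2) $ r + (\<Sum>i<np. p $ i * (B (Suc i) *\<^sub>v y2) $ r))"
    unfolding theta_def using r ba bb by simp
  also have "\<dots> = (aff A p np *\<^sub>v y0) $ r + (aff B p np *\<^sub>v y2) $ r"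
    unfolding aff_mult_vec_index[OF A y0 r] aff_mult_vec_index[OF B y2 r] ..
  finally show "theta y0 (kron_vec p y0) y2 (kron_vec p y2) $ r = (aff A p np *\<^sub>v y0 + aff B p np *\<^sub>v y2) $ r"
    using r Bc by simp
qed

lemma Acl_c: "Acl p \<in> carrier_mat nx nx"
proof -
  have Ac: "aff A p np \<in> carrier_mat nx nx" using A by (rule aff_carrier)
  have Bc: "aff B p np \<in> carrier_mat nx nu" using B by (rule aff_carrier)
  have Kc: "aff Kf p np \<in> carrier_mat nu nx" using Kf_c by (intro aff_carrier) auto
  show ?thesis unfolding Acl_def using Ac Bc Kc by simp
qed

lemma cl_rep: assumes pS: "p \<in> S" and v: "v \<in> carrier_vec nx"
  shows "transpose_mat (Pix p) *\<^sub>v (XF *\<^sub>v (Pix p *\<^sub>v v)) = Acl p *\<^sub>v (P *\<^sub>v v)"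
proof -
  have p: "p \<in> carrier_vec np" using pS S_carrier by blast
  have Ac: "aff A p np \<in> carrier_mat nx nx" using A by (rule aff_carrier)
  have Bc: "aff B p np \<in> carrier_mat nx nu" using B by (rule aff_carrier)
  have Kc: "aff Kf p np \<in> carrier_mat nu nx" using Kf_c by (intro aff_carrier) auto
  have Pvc: "P *\<^sub>v v \<in> carrier_vec nx" using Pc v by simp
  have zc: "Pi3 p *\<^sub>v v \<in> carrier_vec (nx + (np*nx + np*np*nx))" using Pi3_c[OF p] v by simp
  have yc: "F *\<^sub>v (Pi3 p *\<^sub>v v) \<in> carrier_vec N" using Fc zc by simp
  have D: "Xd *\<^sub>v (F *\<^sub>v (Pi3 p *\<^sub>v v)) = P *\<^sub>v v" "XPd *\<^sub>v (F *\<^sub>v (Pi3 p *\<^sub>v v)) = kron_vec p (P *\<^sub>v v)"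
       "Ud *\<^sub>v (F *\<^sub>v (Pi3 p *\<^sub>v v)) = yv p v" "UPd *\<^sub>v (F *\<^sub>v (Pi3 p *\<^sub>v v)) = kron_vec p (yv p v)"
    using Dp_rep[OF p v] by auto
  have "transpose_mat (Pix p) *\<^sub>v (XF *\<^sub>v (Pix p *\<^sub>v v)) = Xp *\<^sub>v (F *\<^sub>v (Pi3 p *\<^sub>v v))"
    unfolding lhs_rep[OF p v] F_rep[OF pS v] ..
  also have "\<dots> = aff A p np *\<^sub>v (P *\<^sub>v v) + aff B p np *\<^sub>v yv p v"
    unfolding data_rep[OF yc] D by (rule theta_kron[OF p Pvc yv_c[OF p v]])
  also have "\<dots> = Acl p *\<^sub>v (P *\<^sub>v v)"
  proof -
    have "Acl p *\<^sub>v (P *\<^sub>v v) = aff A p np *\<^sub>v (P *\<^sub>v v) + (aff B p np * aff Kf p np) *\<^sub>v (P *\<^sub>v v)"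
      unfolding Acl_def using Ac Bc Kc Pvc by (simp add: add_mult_distrib_mat_vec)
    also have "(aff B p np * aff Kf p np) *\<^sub>v (P *\<^sub>v v) = aff B p np *\<^sub>v (aff Kf p np *\<^sub>v (P *\<^sub>v v))"
      by (rule assoc_mult_mat_vec[OF Bc Kc Pvc])
    also have "aff Kf p np *\<^sub>v (P *\<^sub>v v) = yv p v" unfolding yv_def by (rule aff_K[OF p v])
    finally show ?thesis by simp
  qed
  finally show ?thesis .
qed

end

lemma quad_transform: assumes G: "(G::real mat) \<in> carrier_mat a b" and X: "X \<in> carrier_mat a a" and w: "w \<in> carrier_vec b"
  shows "scalar_prod w ((transpose_mat G * X * G) *\<^sub>v w) = scalar_prod (G *\<^sub>v w) (X *\<^sub>v (G *\<^sub>v w))"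
proof -
  have GT: "transpose_mat G \<in> carrier_mat b a" using G by simp
  have Gw: "G *\<^sub>v w \<in> carrier_vec a" using G w by simp
  have XGw: "X *\<^sub>v (G *\<^sub>v w) \<in> carrier_vec a" using X Gw by simp
  have "(transpose_mat G * X * G) *\<^sub>v w = transpose_mat G *\<^sub>v (X *\<^sub>v (G *\<^sub>v w))"
    using assoc_mult_mat_vec[OF mult_carrier_mat[OF GT X] G w] assoc_mult_mat_vec[OF GT X Gw] by simp
  then have "scalar_prod w ((transpose_mat G * X * G) *\<^sub>v w) = scalar_prod (transpose_mat G *\<^sub>v (X *\<^sub>v (G *\<^sub>v w))) w"
    using comm_scalar_prod[OF w, of "transpose_mat G *\<^sub>v (X *\<^sub>v (G *\<^sub>v w))"] GT XGw by simp
  also have "\<dots> = scalar_prod (X *\<^sub>v (G *\<^sub>v w)) (G *\<^sub>v w)" by (rule transpose_vec_mult_scalar[OF G w XGw])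
  also have "\<dots> = scalar_prod (G *\<^sub>v w) (X *\<^sub>v (G *\<^sub>v w))" by (rule comm_scalar_prod[OF XGw Gw])
  finally show ?thesis .
qed

lemma append_vec_assoc: "((a::real vec) @\<^sub>v b) @\<^sub>v c = a @\<^sub>v (b @\<^sub>v c)"
proof (rule eq_vecI)
  fix i assume i: "i < dim_vec (a @\<^sub>v (b @\<^sub>v c))"
  show "((a @\<^sub>v b) @\<^sub>v c) $ i = (a @\<^sub>v (b @\<^sub>v c)) $ i"
  proof (cases "i < dim_vec a")
    case True then show ?thesis using i by simp
  next
    case False
    then show ?thesis using i by (cases "i < dim_vec a + dim_vec b") auto
  qed
qed simp

lemma kron_vec_zero: "kron_vec p (0\<^sub>v n) = (0\<^sub>v (dim_vec p * n) :: real vec)"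
proof (rule eq_vecI)
  fix i assume "i < dim_vec (0\<^sub>v (dim_vec p * n) :: real vec)"
  then have i: "i < dim_vec p * n" by simp
  then have "n > 0" by (cases n) auto
  then show "kron_vec p (0\<^sub>v n) $ i = (0\<^sub>v (dim_vec p * n) :: real vec) $ i" using i by simp
qed simp

lemma add4: assumes a: "(a::real vec) \<in> carrier_vec n1" and a': "a' \<in> carrier_vec n1"
  and b: "b \<in> carrier_vec n2" and b': "b' \<in> carrier_vec n2"
  and c: "c \<in> carrier_vec n3" and c': "c' \<in> carrier_vec n3"
  and d: "d \<in> carrier_vec n4" and d': "d' \<in> carrier_vec n4"
  shows "(a @\<^sub>v b @\<^sub>v c @\<^sub>v d) + (a' @\<^sub>v b' @\<^sub>v c' @\<^sub>v d') = (a + a') @\<^sub>v (b + b') @\<^sub>v (c + c') @\<^sub>v (d + d')"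
proof -
  have cd: "c @\<^sub>v d \<in> carrier_vec (n3+n4)" using c d by simp
  have cd': "c' @\<^sub>v d' \<in> carrier_vec (n3+n4)" using c' d' by simp
  have bcd: "b @\<^sub>v c @\<^sub>v d \<in> carrier_vec (n2+(n3+n4))" using b cd by simp
  have bcd': "b' @\<^sub>v c' @\<^sub>v d' \<in> carrier_vec (n2+(n3+n4))" using b' cd' by simp
  show ?thesis unfolding append_vec_add[OF a a' bcd bcd'] append_vec_add[OF b b' cd cd'] append_vec_add[OF c c' d d'] ..
qed

context lpv begin

definition "P0 = blkdiag P (0\<^sub>m (nx * np) (nx * np))"
definition "W = (P0 @\<^sub>h XF) @\<^sub>r (transpose_mat XF @\<^sub>h P0)"
definition "L11 = 0\<^sub>m (2 * nx * np) (2 * nx * np)"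
definition "L12 = kron (ones np) (1\<^sub>m (2 * nx))"
definition "L21 = 0\<^sub>m nx (2 * nx * np) @\<^sub>r kron (1\<^sub>m np) (1\<^sub>m nx @\<^sub>h 0\<^sub>m nx nx)
                         @\<^sub>r 0\<^sub>m nx (2 * nx * np) @\<^sub>r kron (1\<^sub>m np) (0\<^sub>m nx nx @\<^sub>h 1\<^sub>m nx)"
definition "L22 = (1\<^sub>m nx @\<^sub>h 0\<^sub>m nx nx) @\<^sub>r kron (ones np) (0\<^sub>m nx (2 * nx))
                         @\<^sub>r (0\<^sub>m nx nx @\<^sub>h 1\<^sub>m nx) @\<^sub>r kron (ones np) (0\<^sub>m nx (2 * nx))"
definition "MM1 = (L11 @\<^sub>h L12) @\<^sub>r (1\<^sub>m (2 * nx * np) @\<^sub>h 0\<^sub>m (2 * nx * np) (2 * nx))"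
definition "MM2 = L21 @\<^sub>h L22"
definition "G p = 1\<^sub>m (2 * nx * np) @\<^sub>r kron (diagm p) (1\<^sub>m (2 * nx))"

lemma LMI1': "neg_def (2 * nx * np + 2 * nx) (transpose_mat MM1 * Xi * MM1 - transpose_mat MM2 * W * MM2)"
  using LMI1 unfolding Let_def MM1_def MM2_def L11_def L12_def L21_def L22_def W_def P0_def XF_def Xp_def N_def .

lemma LMI2': "p \<in> S \<Longrightarrow> psd (2 * nx * np) (transpose_mat (G p) * Xi * G p)"
  using LMI2 unfolding Let_def G_def by blast

lemma I0_c: "1\<^sub>m nx @\<^sub>h 0\<^sub>m nx nx \<in> carrier_mat nx (nx + nx)" by (rule hcat_carrier) auto
lemma I0_vec: "v1 \<in> carrier_vec nx \<Longrightarrow> v2 \<in> carrier_vec nx \<Longrightarrow> (1\<^sub>m nx @\<^sub>h 0\<^sub>m nx nx) *\<^sub>v (v1 @\<^sub>v v2) = v1"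
  using hcat_mult_vec[of "1\<^sub>m nx" nx nx "0\<^sub>m nx nx" nx v1 v2] by (simp add: zmv)
lemma OI_c: "0\<^sub>m nx nx @\<^sub>h 1\<^sub>m nx \<in> carrier_mat nx (nx + nx)" by (rule hcat_carrier) auto
lemma OI_vec: "v1 \<in> carrier_vec nx \<Longrightarrow> v2 \<in> carrier_vec nx \<Longrightarrow> (0\<^sub>m nx nx @\<^sub>h 1\<^sub>m nx) *\<^sub>v (v1 @\<^sub>v v2) = v2"
  using hcat_mult_vec[of "0\<^sub>m nx nx" nx nx "1\<^sub>m nx" nx v1 v2] by (simp add: zmv)

lemma MM1_vec: assumes p: "p \<in> carrier_vec np" and v: "v \<in> carrier_vec (2*nx)"
  shows "MM1 *\<^sub>v (kron_vec p v @\<^sub>v v) = G p *\<^sub>v kron_vec (vec np (\<lambda>_. 1)) v"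
proof -
  have e: "np * (2*nx) = 2*nx*np" by simp
  have q: "kron_vec p v \<in> carrier_vec (2*nx*np)" using kron_vec_carrier[OF p v] e by simp
  have one: "vec np (\<lambda>_. 1::real) \<in> carrier_vec np" by simp
  have w: "kron_vec (vec np (\<lambda>_. 1)) v \<in> carrier_vec (2*nx*np)" using kron_vec_carrier[OF one v] e by simp
  have L11c: "L11 \<in> carrier_mat (2*nx*np) (2*nx*np)" unfolding L11_def by simp
  have L12c: "L12 \<in> carrier_mat (2*nx*np) (2*nx)" unfolding L12_def
    using kron_carrier[of "ones np" "1\<^sub>m (2*nx)"] e by simp
  have L12v: "L12 *\<^sub>v v = kron_vec (vec np (\<lambda>_. 1)) v"
    unfolding L12_def using kron_ones_vec[OF one_carrier_mat v, of np] v by simp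
  have r1: "(L11 @\<^sub>h L12) *\<^sub>v (kron_vec p v @\<^sub>v v) = kron_vec (vec np (\<lambda>_. 1)) v"
    unfolding hcat_mult_vec[OF L11c L12c q v] L12v unfolding L11_def using q w by (simp add: zmv)
  have r2: "(1\<^sub>m (2*nx*np) @\<^sub>h 0\<^sub>m (2*nx*np) (2*nx)) *\<^sub>v (kron_vec p v @\<^sub>v v) = kron_vec p v"
    using hcat_mult_vec[OF one_carrier_mat zero_carrier_mat q v] q v by (simp add: zmv)
  have c1: "L11 @\<^sub>h L12 \<in> carrier_mat (2*nx*np) (2*nx*np + 2*nx)" by (rule hcat_carrier[OF L11c L12c])
  have c2: "1\<^sub>m (2*nx*np) @\<^sub>h 0\<^sub>m (2*nx*np) (2*nx) \<in> carrier_mat (2*nx*np) (2*nx*np + 2*nx)"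
    by (rule hcat_carrier) auto
  have qv: "kron_vec p v @\<^sub>v v \<in> carrier_vec (2*nx*np + 2*nx)" using q v by simp
  have lhs: "MM1 *\<^sub>v (kron_vec p v @\<^sub>v v) = kron_vec (vec np (\<lambda>_. 1)) v @\<^sub>v kron_vec p v"
    unfolding MM1_def mat_mult_append[OF c1 c2 qv] r1 r2 ..
  have Dc: "kron (diagm p) (1\<^sub>m (2*nx)) \<in> carrier_mat (2*nx*np) (2*nx*np)"
    using kron_carrier[of "diagm p" "1\<^sub>m (2*nx)"] p e by simp
  have pe: "vec np (\<lambda>i. p $ i * vec np (\<lambda>_. 1) $ i) = p" using p by (intro eq_vecI) auto
  have rhs: "G p *\<^sub>v kron_vec (vec np (\<lambda>_. 1)) v = kron_vec (vec np (\<lambda>_. 1)) v @\<^sub>v kron_vec p v"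
    unfolding G_def mat_mult_append[OF one_carrier_mat Dc w] kron_diag_vec[OF p one v] pe
    using w by simp
  show ?thesis unfolding lhs rhs ..
qed

lemma MM2_vec: assumes p: "p \<in> carrier_vec np" and v1: "v1 \<in> carrier_vec nx" and v2: "v2 \<in> carrier_vec nx"
  shows "MM2 *\<^sub>v (kron_vec p (v1 @\<^sub>v v2) @\<^sub>v (v1 @\<^sub>v v2)) = (v1 @\<^sub>v kron_vec p v1) @\<^sub>v (v2 @\<^sub>v kron_vec p v2)"
proof -
  define v where "v = v1 @\<^sub>v v2"
  have vc: "v \<in> carrier_vec (nx + nx)" unfolding v_def using v1 v2 by simp
  have vc2: "v \<in> carrier_vec (2*nx)" using vc by (simp add: mult_2)
  have e: "np * (nx + nx) = 2*nx*np" by simp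
  have q: "kron_vec p v \<in> carrier_vec (2*nx*np)" using kron_vec_carrier[OF p vc] e by simp
  have K1c: "kron (1\<^sub>m np) (1\<^sub>m nx @\<^sub>h 0\<^sub>m nx nx) \<in> carrier_mat (np*nx) (2*nx*np)"
    using kron_I_carrier[OF I0_c, of np] e by simp
  have K2c: "kron (1\<^sub>m np) (0\<^sub>m nx nx @\<^sub>h 1\<^sub>m nx) \<in> carrier_mat (np*nx) (2*nx*np)"
    using kron_I_carrier[OF OI_c, of np] e by simp
  have Oc: "kron (ones np) (0\<^sub>m nx (2 * nx)) \<in> carrier_mat (np*nx) (2*nx)"
    using kron_carrier[of "ones np" "0\<^sub>m nx (2*nx)"] by simp
  have I0c2: "1\<^sub>m nx @\<^sub>h 0\<^sub>m nx nx \<in> carrier_mat nx (2*nx)" using I0_c by (simp add: mult_2)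
  have OIc2: "0\<^sub>m nx nx @\<^sub>h 1\<^sub>m nx \<in> carrier_mat nx (2*nx)" using OI_c by (simp add: mult_2)
  have L21c: "L21 \<in> carrier_mat (nx + (np*nx + (nx + np*nx))) (2*nx*np)" unfolding L21_def
    by (intro carrier_append_rows zero_carrier_mat K1c K2c)
  have L22c: "L22 \<in> carrier_mat (nx + (np*nx + (nx + np*nx))) (2*nx)" unfolding L22_def
    by (intro carrier_append_rows I0c2 OIc2 Oc)
  have kp1: "kron_vec p v1 \<in> carrier_vec (np*nx)" by (rule kron_vec_carrier[OF p v1])
  have kp2: "kron_vec p v2 \<in> carrier_vec (np*nx)" by (rule kron_vec_carrier[OF p v2])
  have a1: "kron (1\<^sub>m np) (1\<^sub>m nx @\<^sub>h 0\<^sub>m nx nx) *\<^sub>v kron_vec p v = kron_vec p v1"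
    unfolding kron_I_kron_vec[OF I0_c p vc] unfolding v_def I0_vec[OF v1 v2] ..
  have a2: "kron (1\<^sub>m np) (0\<^sub>m nx nx @\<^sub>h 1\<^sub>m nx) *\<^sub>v kron_vec p v = kron_vec p v2"
    unfolding kron_I_kron_vec[OF OI_c p vc] unfolding v_def OI_vec[OF v1 v2] ..
  have z0: "kron (ones np) (0\<^sub>m nx (2 * nx)) *\<^sub>v v = 0\<^sub>v (np*nx)"
    using kron_ones_vec[OF zero_carrier_mat vc2, of np] vc2 by (simp add: zmv kron_vec_zero)
  have l21: "L21 *\<^sub>v kron_vec p v = 0\<^sub>v nx @\<^sub>v kron_vec p v1 @\<^sub>v 0\<^sub>v nx @\<^sub>v kron_vec p v2"
    unfolding L21_def rows4_vec[OF zero_carrier_mat K1c zero_carrier_mat K2c q] a1 a2 using q by (simp add: zmv)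
  have l22: "L22 *\<^sub>v v = v1 @\<^sub>v 0\<^sub>v (np*nx) @\<^sub>v v2 @\<^sub>v 0\<^sub>v (np*nx)"
    unfolding L22_def rows4_vec[OF I0c2 Oc OIc2 Oc vc2] z0 unfolding v_def I0_vec[OF v1 v2] OI_vec[OF v1 v2] ..
  have "MM2 *\<^sub>v (kron_vec p v @\<^sub>v v) = L21 *\<^sub>v kron_vec p v + L22 *\<^sub>v v"
    unfolding MM2_def by (rule hcat_mult_vec[OF L21c L22c q vc2])
  also have "\<dots> = (0\<^sub>v nx + v1) @\<^sub>v (kron_vec p v1 + 0\<^sub>v (np*nx)) @\<^sub>v (0\<^sub>v nx + v2) @\<^sub>v (kron_vec p v2 + 0\<^sub>v (np*nx))"
    unfolding l21 l22 by (rule add4[OF zero_carrier_vec v1 kp1 zero_carrier_vec zero_carrier_vec v2 kp2 zero_carrier_vec])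
  also have "\<dots> = v1 @\<^sub>v kron_vec p v1 @\<^sub>v v2 @\<^sub>v kron_vec p v2" using v1 v2 kp1 kp2 by simp
  finally show ?thesis unfolding v_def append_vec_assoc .
qed

end

context lpv begin

lemma P0_c: "P0 \<in> carrier_mat (nx + np*nx) (nx + np*nx)"
  unfolding P0_def using blkdiag_carrier[OF Pc zero_carrier_mat[of "nx*np" "nx*np"]] by (simp add: mult.commute)

lemma W_quad: assumes pS: "p \<in> S" and v1: "v1 \<in> carrier_vec nx" and v2: "v2 \<in> carrier_vec nx"
  shows "scalar_prod ((v1 @\<^sub>v kron_vec p v1) @\<^sub>v (v2 @\<^sub>v kron_vec p v2)) (W *\<^sub>v ((v1 @\<^sub>v kron_vec p v1) @\<^sub>v (v2 @\<^sub>v kron_vec p v2)))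
     = scalar_prod v1 (P *\<^sub>v v1) + scalar_prod v2 (P *\<^sub>v v2) + 2 * scalar_prod v1 (Acl p *\<^sub>v (P *\<^sub>v v2))"
proof -
  have p: "p \<in> carrier_vec np" using pS S_carrier by blast
  define a1 where "a1 = v1 @\<^sub>v kron_vec p v1"
  define a2 where "a2 = v2 @\<^sub>v kron_vec p v2"
  have kp1: "kron_vec p v1 \<in> carrier_vec (np*nx)" by (rule kron_vec_carrier[OF p v1])
  have kp2: "kron_vec p v2 \<in> carrier_vec (np*nx)" by (rule kron_vec_carrier[OF p v2])
  have kp1': "kron_vec p v1 \<in> carrier_vec (nx*np)" using kp1 by (simp add: mult.commute)
  have kp2': "kron_vec p v2 \<in> carrier_vec (nx*np)" using kp2 by (simp add: mult.commute)
  have a1c: "a1 \<in> carrier_vec (nx + np*nx)" unfolding a1_def using v1 kp1 by simp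
  have a2c: "a2 \<in> carrier_vec (nx + np*nx)" unfolding a2_def using v2 kp2 by simp
  have XFT: "transpose_mat XF \<in> carrier_mat (nx + np*nx) (nx + np*nx)" using XF_c by simp
  have H1: "P0 @\<^sub>h XF \<in> carrier_mat (nx + np*nx) ((nx + np*nx) + (nx + np*nx))" by (rule hcat_carrier[OF P0_c XF_c])
  have H2: "transpose_mat XF @\<^sub>h P0 \<in> carrier_mat (nx + np*nx) ((nx + np*nx) + (nx + np*nx))" by (rule hcat_carrier[OF XFT P0_c])
  have a12: "a1 @\<^sub>v a2 \<in> carrier_vec ((nx + np*nx) + (nx + np*nx))" using a1c a2c by simp
  have Wv: "W *\<^sub>v (a1 @\<^sub>v a2) = (P0 *\<^sub>v a1 + XF *\<^sub>v a2) @\<^sub>v (transpose_mat XF *\<^sub>v a1 + P0 *\<^sub>v a2)"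
    unfolding W_def mat_mult_append[OF H1 H2 a12] hcat_mult_vec[OF P0_c XF_c a1c a2c] hcat_mult_vec[OF XFT P0_c a1c a2c] ..
  have P0a: "\<And>v k. v \<in> carrier_vec nx \<Longrightarrow> k \<in> carrier_vec (nx*np) \<Longrightarrow> P0 *\<^sub>v (v @\<^sub>v k) = (P *\<^sub>v v) @\<^sub>v 0\<^sub>v (nx*np)"
    unfolding P0_def by (simp add: blkdiag_mult_vec[OF Pc zero_carrier_mat] zmv)
  have q1: "scalar_prod a1 (P0 *\<^sub>v a1) = scalar_prod v1 (P *\<^sub>v v1)"
    unfolding a1_def P0a[OF v1 kp1'] using scalar_prod_append[OF v1 kp1' mult_mat_vec_carrier[OF Pc v1] zero_carrier_vec] kp1' by simp
  have q2: "scalar_prod a2 (P0 *\<^sub>v a2) = scalar_prod v2 (P *\<^sub>v v2)"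
    unfolding a2_def P0a[OF v2 kp2'] using scalar_prod_append[OF v2 kp2' mult_mat_vec_carrier[OF Pc v2] zero_carrier_vec] kp2' by simp
  have P0a1: "P0 *\<^sub>v a1 \<in> carrier_vec (nx + np*nx)" using P0_c a1c by simp
  have P0a2: "P0 *\<^sub>v a2 \<in> carrier_vec (nx + np*nx)" using P0_c a2c by simp
  have XFa2: "XF *\<^sub>v a2 \<in> carrier_vec (nx + np*nx)" using XF_c a2c by simp
  have XFTa1: "transpose_mat XF *\<^sub>v a1 \<in> carrier_vec (nx + np*nx)" using XFT a1c by simp
  have cross: "scalar_prod a2 (transpose_mat XF *\<^sub>v a1) = scalar_prod a1 (XF *\<^sub>v a2)"
    using comm_scalar_prod[OF a2c XFTa1] transpose_vec_mult_scalar[OF XF_c a2c a1c] by simp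
  have main: "scalar_prod a1 (XF *\<^sub>v a2) = scalar_prod v1 (Acl p *\<^sub>v (P *\<^sub>v v2))"
  proof -
    have e1: "a1 = Pix p *\<^sub>v v1" unfolding a1_def by (rule Pix_vec[OF p v1, symmetric])
    have e2: "a2 = Pix p *\<^sub>v v2" unfolding a2_def by (rule Pix_vec[OF p v2, symmetric])
    have y: "XF *\<^sub>v (Pix p *\<^sub>v v2) \<in> carrier_vec (nx + np*nx)" using XFa2 e2 by simp
    have Av: "Acl p *\<^sub>v (P *\<^sub>v v2) \<in> carrier_vec nx" by (rule mult_mat_vec_carrier[OF Acl_c mult_mat_vec_carrier[OF Pc v2]])
    have "scalar_prod a1 (XF *\<^sub>v a2) = scalar_prod (XF *\<^sub>v (Pix p *\<^sub>v v2)) (Pix p *\<^sub>v v1)"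
      unfolding e1 e2 by (rule comm_scalar_prod[OF mult_mat_vec_carrier[OF Pix_c[OF p] v1] y])
    also have "\<dots> = scalar_prod (transpose_mat (Pix p) *\<^sub>v (XF *\<^sub>v (Pix p *\<^sub>v v2))) v1"
      by (rule transpose_vec_mult_scalar[OF Pix_c[OF p] v1 y, symmetric])
    also have "\<dots> = scalar_prod (Acl p *\<^sub>v (P *\<^sub>v v2)) v1" unfolding cl_rep[OF pS v2] ..
    also have "\<dots> = scalar_prod v1 (Acl p *\<^sub>v (P *\<^sub>v v2))" by (rule comm_scalar_prod[OF Av v1])
    finally show ?thesis .
  qed
  have "scalar_prod (a1 @\<^sub>v a2) (W *\<^sub>v (a1 @\<^sub>v a2))
      = scalar_prod a1 (P0 *\<^sub>v a1 + XF *\<^sub>v a2) + scalar_prod a2 (transpose_mat XF *\<^sub>v a1 + P0 *\<^sub>v a2)"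
    unfolding Wv by (rule scalar_prod_append[OF a1c a2c]) (use P0a1 XFa2 XFTa1 P0a2 in auto)
  also have "\<dots> = scalar_prod a1 (P0 *\<^sub>v a1) + scalar_prod a1 (XF *\<^sub>v a2) + (scalar_prod a2 (transpose_mat XF *\<^sub>v a1) + scalar_prod a2 (P0 *\<^sub>v a2))"
    unfolding scalar_prod_add_distrib[OF a1c P0a1 XFa2] scalar_prod_add_distrib[OF a2c XFTa1 P0a2] ..
  also have "\<dots> = scalar_prod v1 (P *\<^sub>v v1) + scalar_prod v2 (P *\<^sub>v v2) + 2 * scalar_prod v1 (Acl p *\<^sub>v (P *\<^sub>v v2))"
    unfolding q1 q2 cross main by simp
  finally show ?thesis unfolding a1_def a2_def .
qed

end

context lpv begin

lemma G_c: "p \<in> carrier_vec np \<Longrightarrow> G p \<in> carrier_mat (4*np*nx) (2*nx*np)"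
proof -
  assume p: "p \<in> carrier_vec np"
  have "kron (diagm p) (1\<^sub>m (2*nx)) \<in> carrier_mat (2*nx*np) (2*nx*np)"
    using kron_carrier[of "diagm p" "1\<^sub>m (2*nx)"] p by (simp add: mult.commute)
  then have "G p \<in> carrier_mat (2*nx*np + 2*nx*np) (2*nx*np)" unfolding G_def
    by (intro carrier_append_rows) auto
  moreover have "2*nx*np + 2*nx*np = 4*np*nx" by simp
  ultimately show ?thesis by simp
qed

lemma Xi_c: "Xi \<in> carrier_mat (4*np*nx) (4*np*nx)" using Xi unfolding sym_mat_def by simp

lemma MM1_c: "MM1 \<in> carrier_mat (4*np*nx) (2*nx*np + 2*nx)"
proof -
  have e: "np * (2*nx) = 2*nx*np" by simp
  have L11c: "L11 \<in> carrier_mat (2*nx*np) (2*nx*np)" unfolding L11_def by simp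
  have L12c: "L12 \<in> carrier_mat (2*nx*np) (2*nx)" unfolding L12_def
    using kron_carrier[of "ones np" "1\<^sub>m (2*nx)"] e by simp
  have "MM1 \<in> carrier_mat (2*nx*np + 2*nx*np) (2*nx*np + 2*nx)" unfolding MM1_def
    by (intro carrier_append_rows hcat_carrier L11c L12c) auto
  moreover have "2*nx*np + 2*nx*np = 4*np*nx" by simp
  ultimately show ?thesis by simp
qed

lemma W_c: "W \<in> carrier_mat ((nx + np*nx) + (nx + np*nx)) ((nx + np*nx) + (nx + np*nx))"
  unfolding W_def using XF_c P0_c by (intro carrier_append_rows hcat_carrier) auto

lemma MM2_c: "MM2 \<in> carrier_mat ((nx + np*nx) + (nx + np*nx)) (2*nx*np + 2*nx)"
proof -
  have e: "np * (nx + nx) = 2*nx*np" by simp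
  have K1c: "kron (1\<^sub>m np) (1\<^sub>m nx @\<^sub>h 0\<^sub>m nx nx) \<in> carrier_mat (np*nx) (2*nx*np)"
    using kron_I_carrier[OF I0_c, of np] e by simp
  have K2c: "kron (1\<^sub>m np) (0\<^sub>m nx nx @\<^sub>h 1\<^sub>m nx) \<in> carrier_mat (np*nx) (2*nx*np)"
    using kron_I_carrier[OF OI_c, of np] e by simp
  have Oc: "kron (ones np) (0\<^sub>m nx (2 * nx)) \<in> carrier_mat (np*nx) (2*nx)"
    using kron_carrier[of "ones np" "0\<^sub>m nx (2*nx)"] by simp
  have I0c2: "1\<^sub>m nx @\<^sub>h 0\<^sub>m nx nx \<in> carrier_mat nx (2*nx)" using I0_c by (simp add: mult_2)
  have OIc2: "0\<^sub>m nx nx @\<^sub>h 1\<^sub>m nx \<in> carrier_mat nx (2*nx)" using OI_c by (simp add: mult_2)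
  have L21c: "L21 \<in> carrier_mat (nx + (np*nx + (nx + np*nx))) (2*nx*np)" unfolding L21_def
    by (intro carrier_append_rows zero_carrier_mat K1c K2c)
  have L22c: "L22 \<in> carrier_mat (nx + (np*nx + (nx + np*nx))) (2*nx)" unfolding L22_def
    by (intro carrier_append_rows I0c2 OIc2 Oc)
  have "MM2 \<in> carrier_mat (nx + (np*nx + (nx + np*nx))) (2*nx*np + 2*nx)" unfolding MM2_def
    by (rule hcat_carrier[OF L21c L22c])
  moreover have "nx + (np*nx + (nx + np*nx)) = (nx + np*nx) + (nx + np*nx)" by simp
  ultimately show ?thesis by simp
qed

lemma S_ineq: "\<exists>\<epsilon>>0. \<forall>p\<in>S. \<forall>v1\<in>carrier_vec nx. \<forall>v2\<in>carrier_vec nx.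
   \<epsilon> * (scalar_prod v1 v1 + scalar_prod v2 v2)
     \<le> scalar_prod v1 (P *\<^sub>v v1) + scalar_prod v2 (P *\<^sub>v v2) + 2 * scalar_prod v1 (Acl p *\<^sub>v (P *\<^sub>v v2))"
proof -
  define n where "n = 2 * nx * np + 2 * nx"
  define Q where "Q = transpose_mat MM1 * Xi * MM1 - transpose_mat MM2 * W * MM2"
  have pd: "pos_def n (- Q)" using LMI1' unfolding neg_def_def n_def Q_def .
  obtain \<epsilon> where e0: "\<epsilon> > 0" and eps: "\<And>z. z \<in> carrier_vec n \<Longrightarrow> \<epsilon> * scalar_prod z z \<le> scalar_prod z ((- Q) *\<^sub>v z)"
    using pos_def_margin[OF pd] by blast
  have T1: "transpose_mat MM1 * Xi * MM1 \<in> carrier_mat n n" unfolding n_def using MM1_c Xi_c by simp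
  have T2: "transpose_mat MM2 * W * MM2 \<in> carrier_mat n n" unfolding n_def using MM2_c W_c by simp
  have Qc: "Q \<in> carrier_mat n n" unfolding Q_def by (rule minus_carrier_mat[OF T2])
  have "\<epsilon> * (scalar_prod v1 v1 + scalar_prod v2 v2)
     \<le> scalar_prod v1 (P *\<^sub>v v1) + scalar_prod v2 (P *\<^sub>v v2) + 2 * scalar_prod v1 (Acl p *\<^sub>v (P *\<^sub>v v2))"
    if pS: "p \<in> S" and v1: "v1 \<in> carrier_vec nx" and v2: "v2 \<in> carrier_vec nx" for p v1 v2
  proof -
    have p: "p \<in> carrier_vec np" using pS S_carrier by blast
    define v where "v = v1 @\<^sub>v v2"
    have vc: "v \<in> carrier_vec (2*nx)" unfolding v_def using v1 v2 by (simp add: mult_2)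
    have q: "kron_vec p v \<in> carrier_vec (2*nx*np)" using kron_vec_carrier[OF p vc] by (simp add: mult.commute)
    define z where "z = kron_vec p v @\<^sub>v v"
    have zc: "z \<in> carrier_vec n" unfolding z_def n_def using q vc by simp
    have zc': "z \<in> carrier_vec (2*nx*np + 2*nx)" using zc unfolding n_def .
    have one: "vec np (\<lambda>_. 1::real) \<in> carrier_vec np" by simp
    define w where "w = kron_vec (vec np (\<lambda>_. 1)) v"
    have wc: "w \<in> carrier_vec (2*nx*np)" unfolding w_def using kron_vec_carrier[OF one vc] by (simp add: mult.commute)
    have t1: "scalar_prod z ((transpose_mat MM1 * Xi * MM1) *\<^sub>v z) \<ge> 0"
    proof -
      have "scalar_prod z ((transpose_mat MM1 * Xi * MM1) *\<^sub>v z) = scalar_prod (MM1 *\<^sub>v z) (Xi *\<^sub>v (MM1 *\<^sub>v z))"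
        by (rule quad_transform[OF MM1_c Xi_c zc'])
      also have "MM1 *\<^sub>v z = G p *\<^sub>v w" unfolding z_def w_def by (rule MM1_vec[OF p vc])
      also have "scalar_prod (G p *\<^sub>v w) (Xi *\<^sub>v (G p *\<^sub>v w)) = scalar_prod w ((transpose_mat (G p) * Xi * G p) *\<^sub>v w)"
        by (rule quad_transform[OF G_c[OF p] Xi_c wc, symmetric])
      also have "\<dots> \<ge> 0" using LMI2'[OF pS] wc unfolding psd_def by blast
      finally show ?thesis .
    qed
    have t2: "scalar_prod z ((transpose_mat MM2 * W * MM2) *\<^sub>v z)
       = scalar_prod v1 (P *\<^sub>v v1) + scalar_prod v2 (P *\<^sub>v v2) + 2 * scalar_prod v1 (Acl p *\<^sub>v (P *\<^sub>v v2))"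
    proof -
      have "scalar_prod z ((transpose_mat MM2 * W * MM2) *\<^sub>v z) = scalar_prod (MM2 *\<^sub>v z) (W *\<^sub>v (MM2 *\<^sub>v z))"
        by (rule quad_transform[OF MM2_c W_c zc'])
      also have "MM2 *\<^sub>v z = (v1 @\<^sub>v kron_vec p v1) @\<^sub>v (v2 @\<^sub>v kron_vec p v2)"
        unfolding z_def v_def by (rule MM2_vec[OF p v1 v2])
      finally show ?thesis unfolding W_quad[OF pS v1 v2] .
    qed
    have T1z: "(transpose_mat MM1 * Xi * MM1) *\<^sub>v z \<in> carrier_vec n" using T1 zc by simp
    have T2z: "(transpose_mat MM2 * W * MM2) *\<^sub>v z \<in> carrier_vec n" using T2 zc by simp
    have "scalar_prod z ((- Q) *\<^sub>v z) = - scalar_prod z (Q *\<^sub>v z)"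
      using Qc zc by simp
    also have "scalar_prod z (Q *\<^sub>v z) = scalar_prod z ((transpose_mat MM1 * Xi * MM1) *\<^sub>v z) - scalar_prod z ((transpose_mat MM2 * W * MM2) *\<^sub>v z)"
      unfolding Q_def minus_mult_distrib_mat_vec[OF T1 T2 zc] by (rule scalar_prod_minus_distrib[OF zc T1z T2z])
    finally have "scalar_prod z ((- Q) *\<^sub>v z) \<le> scalar_prod v1 (P *\<^sub>v v1) + scalar_prod v2 (P *\<^sub>v v2) + 2 * scalar_prod v1 (Acl p *\<^sub>v (P *\<^sub>v v2))"
      using t1 t2 by simp
    moreover have "scalar_prod v1 v1 + scalar_prod v2 v2 \<le> scalar_prod z z"
    proof -
      have "scalar_prod z z = scalar_prod (kron_vec p v) (kron_vec p v) + scalar_prod v v"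
        unfolding z_def by (rule scalar_prod_append[OF q vc q vc])
      moreover have "scalar_prod v v = scalar_prod v1 v1 + scalar_prod v2 v2"
        unfolding v_def by (rule scalar_prod_append[OF v1 v2 v1 v2])
      ultimately show ?thesis using sp_nonneg[of "kron_vec p v"] by simp
    qed
    then have "\<epsilon> * (scalar_prod v1 v1 + scalar_prod v2 v2) \<le> \<epsilon> * scalar_prod z z"
      using e0 by (simp add: mult_left_mono)
    ultimately show ?thesis using eps[OF zc] by linarith
  qed
  then show ?thesis using e0 by blast
qed

end

context lpv begin

definition "V x = scalar_prod x (minv P *\<^sub>v x)"

lemma V_alt: assumes x: "x \<in> carrier_vec nx"
  shows "V x = scalar_prod (minv P *\<^sub>v x) (P *\<^sub>v (minv P *\<^sub>v x))" "P *\<^sub>v (minv P *\<^sub>v x) = x"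
proof -
  show e: "P *\<^sub>v (minv P *\<^sub>v x) = x"
    using assoc_mult_mat_vec[OF Pc Pinv(1) x, symmetric] Pinv(2) x by simp
  have y: "minv P *\<^sub>v x \<in> carrier_vec nx" using Pinv(1) x by simp
  show "V x = scalar_prod (minv P *\<^sub>v x) (P *\<^sub>v (minv P *\<^sub>v x))"
    unfolding V_def e by (rule comm_scalar_prod[OF x y])
qed

lemma P_nonneg: "y \<in> carrier_vec nx \<Longrightarrow> scalar_prod y (P *\<^sub>v y) \<ge> 0"
proof (cases "y = 0\<^sub>v nx")
  case True then show ?thesis using Pc by simp
next
  case False
  assume y: "y \<in> carrier_vec nx"
  then show ?thesis using P False unfolding pos_def_def by (simp add: less_imp_le)
qed

lemma V_nonneg: assumes x: "x \<in> carrier_vec nx" shows "V x \<ge> 0"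
proof -
  have y: "minv P *\<^sub>v x \<in> carrier_vec nx" using Pinv(1) x by simp
  show ?thesis unfolding V_alt(1)[OF x] by (rule P_nonneg[OF y])
qed

lemma Lyap: "\<exists>\<rho>. 0 \<le> \<rho> \<and> \<rho> < 1 \<and> (\<forall>p\<in>S. \<forall>x\<in>carrier_vec nx. V (Acl p *\<^sub>v x) \<le> \<rho> * V x)"
proof -
  obtain \<epsilon> where e0: "\<epsilon> > 0" and eps: "\<And>p v1 v2. p \<in> S \<Longrightarrow> v1 \<in> carrier_vec nx \<Longrightarrow> v2 \<in> carrier_vec nx \<Longrightarrow>
     \<epsilon> * (scalar_prod v1 v1 + scalar_prod v2 v2)
     \<le> scalar_prod v1 (P *\<^sub>v v1) + scalar_prod v2 (P *\<^sub>v v2) + 2 * scalar_prod v1 (Acl p *\<^sub>v (P *\<^sub>v v2))"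
    using S_ineq by blast
  obtain C where C0: "C > 0" and Cb: "\<And>y. y \<in> carrier_vec nx \<Longrightarrow> scalar_prod y (P *\<^sub>v y) \<le> C * scalar_prod y y"
    using quad_upper[OF Pc] by blast
  define \<rho> where "\<rho> = max 0 (1 - \<epsilon> / C)"
  have r0: "0 \<le> \<rho>" unfolding \<rho>_def by simp
  have r1: "\<rho> < 1" unfolding \<rho>_def using e0 C0 by simp
  have "V (Acl p *\<^sub>v x) \<le> \<rho> * V x" if pS: "p \<in> S" and x: "x \<in> carrier_vec nx" for p x
  proof -
    define y where "y = minv P *\<^sub>v x"
    define ax where "ax = Acl p *\<^sub>v x"
    have axc: "ax \<in> carrier_vec nx" unfolding ax_def by (rule mult_mat_vec_carrier[OF Acl_c x])
    define y1 where "y1 = minv P *\<^sub>v ax"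
    have yc: "y \<in> carrier_vec nx" unfolding y_def using Pinv(1) x by simp
    have y1c: "y1 \<in> carrier_vec nx" unfolding y1_def using Pinv(1) axc by simp
    have Py: "P *\<^sub>v y = x" unfolding y_def by (rule V_alt(2)[OF x])
    have Py1: "P *\<^sub>v y1 = ax" unfolding y1_def by (rule V_alt(2)[OF axc])
    have Vx: "V x = scalar_prod y (P *\<^sub>v y)" unfolding y_def by (rule V_alt(1)[OF x])
    have Vax: "V ax = scalar_prod y1 (P *\<^sub>v y1)" unfolding y1_def by (rule V_alt(1)[OF axc])
    define v1 where "v1 = (-1::real) \<cdot>\<^sub>v y1"
    have v1c: "v1 \<in> carrier_vec nx" unfolding v1_def using y1c by simp
    have Pyc: "P *\<^sub>v y1 \<in> carrier_vec nx" using Pc y1c by simp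
    have a: "scalar_prod v1 v1 = scalar_prod y1 y1" unfolding v1_def using y1c by simp
    have b: "scalar_prod v1 (P *\<^sub>v v1) = scalar_prod y1 (P *\<^sub>v y1)"
      unfolding v1_def mult_mat_vec[OF Pc y1c] using y1c Pyc by simp
    have c: "scalar_prod v1 (Acl p *\<^sub>v (P *\<^sub>v y)) = - scalar_prod y1 (P *\<^sub>v y1)"
      unfolding v1_def Py Py1[symmetric] ax_def[symmetric] using y1c axc Py1 by simp
    have "\<epsilon> * (scalar_prod v1 v1 + scalar_prod y y) \<le> scalar_prod v1 (P *\<^sub>v v1) + scalar_prod y (P *\<^sub>v y) + 2 * scalar_prod v1 (Acl p *\<^sub>v (P *\<^sub>v y))"
      by (rule eps[OF pS v1c yc])
    then have "\<epsilon> * (scalar_prod y1 y1 + scalar_prod y y) \<le> V x - V ax"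
      unfolding a b c Vx Vax by simp
    moreover have "\<epsilon> * scalar_prod y y \<le> \<epsilon> * (scalar_prod y1 y1 + scalar_prod y y)"
      using e0 sp_nonneg[of y1] by (simp add: mult_left_mono)
    moreover have "V x \<le> C * scalar_prod y y" unfolding Vx by (rule Cb[OF yc])
    ultimately have "V x - V ax \<ge> (\<epsilon> / C) * V x"
    proof -
      assume h1: "\<epsilon> * (scalar_prod y1 y1 + scalar_prod y y) \<le> V x - V ax"
        and h2: "\<epsilon> * scalar_prod y y \<le> \<epsilon> * (scalar_prod y1 y1 + scalar_prod y y)"
        and h3: "V x \<le> C * scalar_prod y y"
      have "(\<epsilon> / C) * V x \<le> (\<epsilon> / C) * (C * scalar_prod y y)"
        using h3 e0 C0 by (intro mult_left_mono) auto
      also have "\<dots> = \<epsilon> * scalar_prod y y" using C0 by simp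
      finally show ?thesis using h1 h2 by linarith
    qed
    then have "V ax \<le> (1 - \<epsilon> / C) * V x" by (simp add: algebra_simps)
    also have "\<dots> \<le> \<rho> * V x" unfolding \<rho>_def using V_nonneg[OF x] by (intro mult_right_mono) auto
    finally show ?thesis unfolding ax_def .
  qed
  then show ?thesis using r0 r1 by blast
qed

lemma V_lower: "\<exists>c>0. \<forall>x\<in>carrier_vec nx. c * scalar_prod x x \<le> V x"
proof -
  obtain m where m0: "m > 0" and mb: "\<And>y. y \<in> carrier_vec nx \<Longrightarrow> m * scalar_prod y y \<le> scalar_prod y (P *\<^sub>v y)"
    using pos_def_margin[OF P] by blast
  have PTP: "transpose_mat P * P \<in> carrier_mat nx nx" using Pc by simp
  obtain C where C0: "C > 0" and Cb: "\<And>y. y \<in> carrier_vec nx \<Longrightarrow> scalar_prod y ((transpose_mat P * P) *\<^sub>v y) \<le> C * scalar_prod y y"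
    using quad_upper[OF PTP] by blast
  have "(m / C) * scalar_prod x x \<le> V x" if x: "x \<in> carrier_vec nx" for x
  proof -
    define y where "y = minv P *\<^sub>v x"
    have yc: "y \<in> carrier_vec nx" unfolding y_def using Pinv(1) x by simp
    have Py: "P *\<^sub>v y = x" unfolding y_def by (rule V_alt(2)[OF x])
    have Vx: "V x = scalar_prod y (P *\<^sub>v y)" unfolding y_def by (rule V_alt(1)[OF x])
    have "scalar_prod x x = scalar_prod y ((transpose_mat P * P) *\<^sub>v y)"
    proof -
      have Pyc: "P *\<^sub>v y \<in> carrier_vec nx" using Pc yc by simp
      have "scalar_prod y ((transpose_mat P * P) *\<^sub>v y) = scalar_prod (transpose_mat P *\<^sub>v (P *\<^sub>v y)) y"
        using assoc_mult_mat_vec[of "transpose_mat P" nx nx P nx y] Pc yc comm_scalar_prod[OF yc, of "transpose_mat P *\<^sub>v (P *\<^sub>v y)"]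
        by simp
      also have "\<dots> = scalar_prod (P *\<^sub>v y) (P *\<^sub>v y)" by (rule transpose_vec_mult_scalar[OF Pc yc Pyc])
      finally show ?thesis unfolding Py by simp
    qed
    then have "scalar_prod x x \<le> C * scalar_prod y y" using Cb[OF yc] by simp
    then have "(m / C) * scalar_prod x x \<le> (m / C) * (C * scalar_prod y y)"
      using m0 C0 by (intro mult_left_mono) auto
    also have "\<dots> = m * scalar_prod y y" using C0 by simp
    also have "\<dots> \<le> V x" unfolding Vx by (rule mb[OF yc])
    finally show ?thesis .
  qed
  then show ?thesis using m0 C0 by (intro exI[of _ "m / C"]) auto
qed

lemma V_upper: "\<exists>c>0. \<forall>x\<in>carrier_vec nx. V x \<le> c * scalar_prod x x"
  unfolding V_def by (rule quad_upper[OF Pinv(1)])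

lemma traj_carrier: "x0 \<in> carrier_vec nx \<Longrightarrow> cl_traj Acl ps x0 k \<in> carrier_vec nx"
  by (induction k) (auto intro: mult_mat_vec_carrier[OF Acl_c])

lemma traj_bound: "\<exists>\<rho> R. 0 \<le> \<rho> \<and> \<rho> < 1 \<and> R \<ge> 0 \<and> (\<forall>ps. (\<forall>k. ps k \<in> S) \<longrightarrow> (\<forall>x0\<in>carrier_vec nx. \<forall>k.
    vnorm (cl_traj Acl ps x0 k) \<le> sqrt \<rho> ^ k * (sqrt R * vnorm x0)))"
proof -
  obtain \<rho> where r0: "0 \<le> \<rho>" and r1: "\<rho> < 1" and dec: "\<And>p x. p \<in> S \<Longrightarrow> x \<in> carrier_vec nx \<Longrightarrow> V (Acl p *\<^sub>v x) \<le> \<rho> * V x"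
    using Lyap by blast
  obtain c1 where c10: "c1 > 0" and c1b: "\<And>x. x \<in> carrier_vec nx \<Longrightarrow> c1 * scalar_prod x x \<le> V x"
    using V_lower by blast
  obtain c2 where c20: "c2 > 0" and c2b: "\<And>x. x \<in> carrier_vec nx \<Longrightarrow> V x \<le> c2 * scalar_prod x x"
    using V_upper by blast
  define R where "R = c2 / c1"
  have R0: "R \<ge> 0" unfolding R_def using c10 c20 by simp
  have "vnorm (cl_traj Acl ps x0 k) \<le> sqrt \<rho> ^ k * (sqrt R * vnorm x0)"
    if ps: "\<forall>k. ps k \<in> S" and x0: "x0 \<in> carrier_vec nx" for ps x0 k
  proof -
    have Vk: "V (cl_traj Acl ps x0 k) \<le> \<rho> ^ k * V x0" for k
    proof (induction k)
      case 0 then show ?case by simp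
    next
      case (Suc k)
      have "V (cl_traj Acl ps x0 (Suc k)) \<le> \<rho> * V (cl_traj Acl ps x0 k)"
        using dec[OF _ traj_carrier[OF x0]] ps by simp
      also have "\<dots> \<le> \<rho> * (\<rho> ^ k * V x0)" using Suc r0 by (intro mult_left_mono) auto
      finally show ?case by simp
    qed
    have xk: "cl_traj Acl ps x0 k \<in> carrier_vec nx" by (rule traj_carrier[OF x0])
    have "c1 * scalar_prod (cl_traj Acl ps x0 k) (cl_traj Acl ps x0 k) \<le> \<rho> ^ k * (c2 * scalar_prod x0 x0)"
    proof -
      have "c1 * scalar_prod (cl_traj Acl ps x0 k) (cl_traj Acl ps x0 k) \<le> V (cl_traj Acl ps x0 k)" by (rule c1b[OF xk])
      also have "\<dots> \<le> \<rho> ^ k * V x0" by (rule Vk)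
      also have "\<dots> \<le> \<rho> ^ k * (c2 * scalar_prod x0 x0)" using c2b[OF x0] r0 by (intro mult_left_mono) auto
      finally show ?thesis .
    qed
    then have "scalar_prod (cl_traj Acl ps x0 k) (cl_traj Acl ps x0 k) \<le> \<rho> ^ k * R * scalar_prod x0 x0"
      unfolding R_def using c10 by (simp add: field_simps)
    then have "sqrt (scalar_prod (cl_traj Acl ps x0 k) (cl_traj Acl ps x0 k)) \<le> sqrt (\<rho> ^ k * R * scalar_prod x0 x0)"
      by (rule real_sqrt_le_mono)
    also have "\<dots> = sqrt \<rho> ^ k * (sqrt R * vnorm x0)"
      unfolding vnorm_def by (simp add: real_sqrt_mult real_sqrt_power)
    finally show ?thesis unfolding vnorm_def .
  qed
  then show ?thesis using r0 r1 R0 by blast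
qed

lemma stable: "asymp_stable_LPV nx S Acl"
proof -
  obtain \<rho> R where r0: "0 \<le> \<rho>" and r1: "\<rho> < 1" and R0: "R \<ge> 0"
    and bd: "\<And>ps x0 k. \<forall>k. ps k \<in> S \<Longrightarrow> x0 \<in> carrier_vec nx \<Longrightarrow> vnorm (cl_traj Acl ps x0 k) \<le> sqrt \<rho> ^ k * (sqrt R * vnorm x0)"
    using traj_bound by blast
  have sr0: "0 \<le> sqrt \<rho>" using r0 by simp
  have sr1: "sqrt \<rho> < 1" using r1 r0 by simp
  have vn0: "\<And>x. vnorm x \<ge> 0" unfolding vnorm_def using sp_nonneg by simp
  show ?thesis unfolding asymp_stable_LPV_def
  proof (rule allI, rule impI, rule conjI)
    fix ps :: "nat \<Rightarrow> real vec" assume ps: "\<forall>k. ps k \<in> S"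
    show "\<forall>\<epsilon>>0. \<exists>\<delta>>0. \<forall>x0\<in>carrier_vec nx. vnorm x0 < \<delta> \<longrightarrow> (\<forall>k. vnorm (cl_traj Acl ps x0 k) < \<epsilon>)"
    proof (intro allI impI)
      fix \<epsilon> :: real assume e: "\<epsilon> > 0"
      define \<delta> where "\<delta> = \<epsilon> / (sqrt R + 1)"
      have sR: "sqrt R \<ge> 0" using R0 by simp
      have sR1: "sqrt R + 1 > 0" using sR by linarith
      have d0: "\<delta> > 0" unfolding \<delta>_def by (rule divide_pos_pos[OF e sR1])
      have "vnorm (cl_traj Acl ps x0 k) < \<epsilon>" if x0: "x0 \<in> carrier_vec nx" and small: "vnorm x0 < \<delta>" for x0 k
      proof -
        have "vnorm (cl_traj Acl ps x0 k) \<le> sqrt \<rho> ^ k * (sqrt R * vnorm x0)" by (rule bd[OF ps x0])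
        also have "\<dots> \<le> 1 * (sqrt R * vnorm x0)"
          using sr0 sr1 sR vn0[of x0] by (intro mult_right_mono power_le_one) auto
        also have "\<dots> \<le> sqrt R * \<delta>" using sR small by (simp add: mult_left_mono)
        also have "\<dots> < \<epsilon>"
        proof -
          have "sqrt R * \<delta> = \<epsilon> * (sqrt R / (sqrt R + 1))" unfolding \<delta>_def by simp
          also have "\<dots> < \<epsilon> * 1"
          proof (rule mult_strict_left_mono[OF _ e])
            show "sqrt R / (sqrt R + 1) < 1" using sR1 by (simp add: divide_less_eq_1)
          qed
          finally show ?thesis by simp
        qed
        finally show ?thesis .
      qed
      then show "\<exists>\<delta>>0. \<forall>x0\<in>carrier_vec nx. vnorm x0 < \<delta> \<longrightarrow> (\<forall>k. vnorm (cl_traj Acl ps x0 k) < \<epsilon>)"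
        using d0 by blast
    qed
    show "\<exists>\<eta>>0. \<forall>x0\<in>carrier_vec nx. vnorm x0 < \<eta> \<longrightarrow> (\<lambda>k. vnorm (cl_traj Acl ps x0 k)) \<longlonglongrightarrow> 0"
    proof (intro exI[of _ 1] conjI ballI impI)
      fix x0 :: "real vec" assume x0: "x0 \<in> carrier_vec nx"
      have lim: "(\<lambda>k. sqrt \<rho> ^ k * (sqrt R * vnorm x0)) \<longlonglongrightarrow> 0"
        using LIMSEQ_power_zero[of "sqrt \<rho>"] sr0 sr1 by (intro tendsto_mult_left_zero) auto
      show "(\<lambda>k. vnorm (cl_traj Acl ps x0 k)) \<longlonglongrightarrow> 0"
        by (rule real_tendsto_sandwich[of "\<lambda>_. 0" _ _ "\<lambda>k. sqrt \<rho> ^ k * (sqrt R * vnorm x0)"])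
           (use vn0 bd[OF ps x0] lim in auto)
    qed simp
  qed
qed

end

theorem theorem3:
  fixes nx nu np Nd :: nat
    and S :: "real vec set"
    and A B :: "nat \<Rightarrow> real mat"
    and ud pd xd :: "nat \<Rightarrow> real vec"
    and P F FQ Y0 Ybar Xi :: "real mat"
  assumes S: "sched_set np S"
    and A: "\<forall>i\<le>np. A i \<in> carrier_mat nx nx"
    and B: "\<forall>i\<le>np. B i \<in> carrier_mat nx nu"
    and data_dims: "\<forall>k\<in>{1..Nd}. xd k \<in> carrier_vec nx \<and> ud k \<in> carrier_vec nu \<and> pd k \<in> S"
    and data_traj: "\<forall>k\<in>{1..<Nd}. xd (Suc k) = aff A (pd k) np *\<^sub>v xd k + aff B (pd k) np *\<^sub>v ud k"
    and rank: "let Dp = dmat nx (Nd - 1) xd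
                   @\<^sub>r dmat (np * nx) (Nd - 1) (\<lambda>k. kron_vec (pd k) (xd k))
                   @\<^sub>r dmat nu (Nd - 1) ud
                   @\<^sub>r dmat (np * nu) (Nd - 1) (\<lambda>k. kron_vec (pd k) (ud k))
               in vec_space.rank (dim_row Dp) Dp = (1 + np) * (nx + nu)"
    and P: "pos_def nx P"
    and F: "F \<in> carrier_mat (Nd - 1) (nx * (1 + np + np * np))"
    and FQ: "FQ \<in> carrier_mat ((Nd - 1) * (1 + np)) (nx * (1 + np))"
    and F_FQ: "\<forall>p\<in>S. F * (1\<^sub>m nx @\<^sub>r kron (colmat p) (1\<^sub>m nx) @\<^sub>r kron (kron (colmat p) (colmat p)) (1\<^sub>m nx))
                 = transpose_mat (1\<^sub>m (Nd - 1) @\<^sub>r kron (colmat p) (1\<^sub>m (Nd - 1))) * FQ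
                   * (1\<^sub>m nx @\<^sub>r kron (colmat p) (1\<^sub>m nx))"
    and Y0: "Y0 \<in> carrier_mat nu nx"
    and Ybar: "Ybar \<in> carrier_mat nu (nx * np)"
    and Xi: "sym_mat (4 * np * nx) Xi"
    and DpF: "(P @\<^sub>h 0\<^sub>m nx (np * nx) @\<^sub>h 0\<^sub>m nx (np * np * nx))
              @\<^sub>r (0\<^sub>m (np * nx) nx @\<^sub>h kron (1\<^sub>m np) P @\<^sub>h 0\<^sub>m (np * nx) (np * np * nx))
              @\<^sub>r (Y0 @\<^sub>h Ybar @\<^sub>h 0\<^sub>m nu (np * np * nx))
              @\<^sub>r (0\<^sub>m (np * nu) nx @\<^sub>h kron (1\<^sub>m np) Y0 @\<^sub>h kron (1\<^sub>m np) Ybar)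
            = (dmat nx (Nd - 1) xd
               @\<^sub>r dmat (np * nx) (Nd - 1) (\<lambda>k. kron_vec (pd k) (xd k))
               @\<^sub>r dmat nu (Nd - 1) ud
               @\<^sub>r dmat (np * nu) (Nd - 1) (\<lambda>k. kron_vec (pd k) (ud k))) * F"
    and LMI1: "let Xplus = dmat nx (Nd - 1) (\<lambda>k. xd (Suc k));
                   XF = blkdiag Xplus (kron (1\<^sub>m np) Xplus) * FQ;
                   P0 = blkdiag P (0\<^sub>m (nx * np) (nx * np));
                   W = (P0 @\<^sub>h XF) @\<^sub>r (transpose_mat XF @\<^sub>h P0);
                   L11 = 0\<^sub>m (2 * nx * np) (2 * nx * np);
                   L12 = kron (ones np) (1\<^sub>m (2 * nx));
                   L21 = 0\<^sub>m nx (2 * nx * np)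
                         @\<^sub>r kron (1\<^sub>m np) (1\<^sub>m nx @\<^sub>h 0\<^sub>m nx nx)
                         @\<^sub>r 0\<^sub>m nx (2 * nx * np)
                         @\<^sub>r kron (1\<^sub>m np) (0\<^sub>m nx nx @\<^sub>h 1\<^sub>m nx);
                   L22 = (1\<^sub>m nx @\<^sub>h 0\<^sub>m nx nx)
                         @\<^sub>r kron (ones np) (0\<^sub>m nx (2 * nx))
                         @\<^sub>r (0\<^sub>m nx nx @\<^sub>h 1\<^sub>m nx)
                         @\<^sub>r kron (ones np) (0\<^sub>m nx (2 * nx));
                   M1 = (L11 @\<^sub>h L12) @\<^sub>r (1\<^sub>m (2 * nx * np) @\<^sub>h 0\<^sub>m (2 * nx * np) (2 * nx));
                   M2 = L21 @\<^sub>h L22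
               in neg_def (2 * nx * np + 2 * nx)
                    (transpose_mat M1 * Xi * M1 - transpose_mat M2 * W * M2)"
    and LMI2: "\<forall>p\<in>S. let G = 1\<^sub>m (2 * nx * np) @\<^sub>r kron (diagm p) (1\<^sub>m (2 * nx))
                      in psd (2 * nx * np) (transpose_mat G * Xi * G)"
  shows "let K0 = Y0 * minv P;
             Kbar = Ybar * minv (kron (1\<^sub>m np) P);
             K = (\<lambda>i. if i = 0 then K0 else mat nu nx (\<lambda>(r,c). Kbar $$ (r, (i - 1) * nx + c)))
         in asymp_stable_LPV nx S (\<lambda>p. aff A p np + aff B p np * aff K p np)"
proof -
  interpret lpv nx nu np Nd S A B ud pd xd P F FQ Y0 Ybar Xi
    by unfold_locales (fact assms)+
  show ?thesis unfolding Let_def using stable unfolding Acl_def Kf_def K0_def Kbar_def .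
qed

end
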